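(* Let $T>0$, $\tau>0$, $H\in(1/2,1)$, and let $B^H=\{B^H(t):t\in[0,T]\}$ be a fractional Brownian motion with Hurst parameter $H$ on a complete probability space $(\Omega,\mathcal F,P)$. Let $\lambda\in(1/2,H)$, let $\xi\in C^\lambda([-\tau,0];\mathbb{R})$, and let $f:C^\lambda([-\tau,0];\mathbb{R})\to\mathbb{R}$ satisfy: (A) there is $M_1>0$ with $|f(\psi_2)-f(\psi_1)|\le M_1\|\psi_2-\psi_1\|_{[-\tau,0]}$ for all $\psi_1,\psi_2\in C^\lambda([-\tau,0];\mathbb{R})$; (B) for every $0\le a_1<a_2\le T$, every $\rho\in C^\lambda([a_1-\tau,a_1];\mathbb{R})$ and every $N\ge1$ there is $c_N>0$ such that $\|\mathcal U(Z)-\mathcal U(W)\|_{\lambda,[a_1,a_2]}\le c_N\|Z-W\|_{\lambda,[a_1-\tau,a_2]}$ for all $Z,W\in C^\lambda_{\rho,a_1,a_2}(\mathbb{R})$ with $\max\{\|Z\|_{\lambda,[a_1-\tau,a_2]},\|W\|_{\lambda,[a_1-\tau,a_2]}\}\le N$, where $\mathcal U(Z)(s)=f(\overline Z_s)$, $s\in[a_1,a_2]$. Then (pathwise, for every $\omega$ such that $B^H(\omega,\cdot)$ is $\gamma$-Hölder continuous on $[0,T]$ for some $\gamma\in(\lambda,H)$, which holds almost surely) the equation $$X(t)=\xi(0)+\int_0^t f(\overline X_s)\,dB^H(s),\ t\in[0,T],\qquad \overline X_0=\xi,$$ has a unique solution $X$ in $C^\lambda_{\xi,0,T}(\mathbb{R})$.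 Furthermore, for all $0\le s\le t\le T$, $$X(t)-X(s)=f(\overline X_s)\,(B^H(t)-B^H(s))+R^X(s,t),$$ where $|R^X(s,t)|\le C_X|t-s|^{2\lambda}$ for some positive constant $C_X$.
   Context: For an interval $[a,b]$ and $\mu\in(0,1)$, $C^\mu([a,b];\mathbb{R})$ is the set of $\mu$-Hölder continuous functions with seminorm $\|\phi\|_{\mu,[a,b]}=\sup_{x\ne y\in[a,b]}|\phi(x)-\phi(y)|/|x-y|^\mu$, and $\|\phi\|_{[a,b]}=\sup_{x\in[a,b]}|\phi(x)|$ is the supremum norm. For $0\le a_1<a_2$ and $\rho\in C^\mu([a_1-\tau,a_1];\mathbb{R})$, $C^\mu_{\rho,a_1,a_2}(\mathbb{R})=\{\zeta\in C^\mu([a_1-\tau,a_2];\mathbb{R}):\zeta=\rho\text{ on }[a_1-\tau,a_1]\}$, with the metric $\|\zeta_1-\zeta_2\|_{\mu,[a_1-\tau,a_2]}$. For a function $Z$ defined on $[a_1-\tau,a_2]$ and $s\in[a_1,a_2]$, the segment $\overline Z_s:[-\tau,0]\to\mathbb{R}$ is $\overline Z_s(\theta)=Z(s+\theta)$. The stochastic integral is the pathwise Young integral: for $h\in C^\alpha$, $g\in C^\beta$ with $\alpha+\beta>1$, $\int_s^t h\,dg$ is the limit of Riemann sums $\sum h(r_i)(g(r_{i+1})-g(r_i))$ as the mesh of the partition of $[s,t]$ tends to zero. A solution in $C^\lambda_{\xi,0,T}(\mathbb{R})$ is a function $X\in C^\lambda([-\tau,T];\mathbb{R})$ with $X=\xi$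 on $[-\tau,0]$ satisfying the integral equation. *)

theory Defs
  imports "HOL-Probability.Probability"
begin

definition holder_on :: "real \<Rightarrow> real \<Rightarrow> real \<Rightarrow> (real \<Rightarrow> real) \<Rightarrow> bool" where
  "holder_on \<mu> a b \<phi> \<longleftrightarrow> (\<exists>C. \<forall>x\<in>{a..b}. \<forall>y\<in>{a..b}. \<bar>\<phi> x - \<phi> y\<bar> \<le> C * \<bar>x - y\<bar> powr \<mu>)"

definition holder_semi :: "real \<Rightarrow> real \<Rightarrow> real \<Rightarrow> (real \<Rightarrow> real) \<Rightarrow> real" where
  "holder_semi \<mu> a b \<phi> =
     (SUP p\<in>{(x,y). x \<in> {a..b} \<and> y \<in> {a..b} \<and> x \<noteq> y}.
        \<bar>\<phi> (fst p) - \<phi> (snd p)\<bar> / \<bar>fst p - snd p\<bar> powr \<mu>)"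

definition sup_norm :: "real \<Rightarrow> real \<Rightarrow> (real \<Rightarrow> real) \<Rightarrow> real" where
  "sup_norm a b \<phi> = (SUP x\<in>{a..b}. \<bar>\<phi> x\<bar>)"

definition holder_rho :: "real \<Rightarrow> real \<Rightarrow> (real \<Rightarrow> real) \<Rightarrow> real \<Rightarrow> real \<Rightarrow> (real \<Rightarrow> real) set" where
  "holder_rho \<mu> \<tau> \<rho> a1 a2 =
     {\<zeta>. holder_on \<mu> (a1 - \<tau>) a2 \<zeta> \<and> (\<forall>x\<in>{a1 - \<tau>..a1}. \<zeta> x = \<rho> x)}"

(* segment  bar Z_s (theta) = Z(s+theta) on [-tau,0]; normalised to 0 outside [-tau,0] *)
definition seg :: "real \<Rightarrow> (real \<Rightarrow> real) \<Rightarrow> real \<Rightarrow> real \<Rightarrow> real" where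
  "seg \<tau> Z s = (\<lambda>\<theta>. if \<theta> \<in> {-\<tau>..0} then Z (s + \<theta>) else 0)"

definition is_partition :: "real \<Rightarrow> real \<Rightarrow> real list \<Rightarrow> bool" where
  "is_partition s t p \<longleftrightarrow> p \<noteq> [] \<and> hd p = s \<and> last p = t \<and> sorted_wrt (<) p"

definition mesh_less :: "real list \<Rightarrow> real \<Rightarrow> bool" where
  "mesh_less p \<delta> \<longleftrightarrow> (\<forall>i < length p - 1. p ! (Suc i) - p ! i < \<delta>)"

definition riemann_sum :: "(real \<Rightarrow> real) \<Rightarrow> (real \<Rightarrow> real) \<Rightarrow> real list \<Rightarrow> real" where
  "riemann_sum h g p = (\<Sum>i < length p - 1. h (p ! i) * (g (p ! Suc i) - g (p ! i)))"

definition has_young_integral :: "(real \<Rightarrow> real) \<Rightarrow> (real \<Rightarrow> real) \<Rightarrow> real \<Rightarrow> real \<Rightarrow> real \<Rightarrow> bool" where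
  "has_young_integral h g s t I \<longleftrightarrow>
     (\<forall>\<epsilon>>0. \<exists>\<delta>>0. \<forall>p. is_partition s t p \<and> mesh_less p \<delta> \<longrightarrow> \<bar>riemann_sum h g p - I\<bar> < \<epsilon>)"

definition is_solution ::
  "real \<Rightarrow> real \<Rightarrow> real \<Rightarrow> ((real \<Rightarrow> real) \<Rightarrow> real) \<Rightarrow> (real \<Rightarrow> real) \<Rightarrow> (real \<Rightarrow> real) \<Rightarrow> (real \<Rightarrow> real) \<Rightarrow> bool" where
  "is_solution lam \<tau> T f \<xi> b X \<longleftrightarrow>
     X \<in> holder_rho lam \<tau> \<xi> 0 T \<and>
     (\<forall>t\<in>{0..T}. has_young_integral (\<lambda>s. f (seg \<tau> X s)) b 0 t (X t - \<xi> 0))"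

definition fbm_cov :: "real \<Rightarrow> real \<Rightarrow> real \<Rightarrow> real" where
  "fbm_cov H s t = (s powr (2*H) + t powr (2*H) - \<bar>t - s\<bar> powr (2*H)) / 2"

definition centered_gaussian :: "'a measure \<Rightarrow> ('a \<Rightarrow> real) \<Rightarrow> real \<Rightarrow> bool" where
  "centered_gaussian M X v \<longleftrightarrow> X \<in> borel_measurable M \<and>
     distr M lborel X = (if v = 0 then return lborel 0 else density lborel (normal_density 0 (sqrt v)))"

definition is_fbm :: "'a measure \<Rightarrow> real \<Rightarrow> real \<Rightarrow> ('a \<Rightarrow> real \<Rightarrow> real) \<Rightarrow> bool" where
  "is_fbm M H T B \<longleftrightarrow>
     (\<forall>t\<in>{0..T}. (\<lambda>\<omega>. B \<omega> t) \<in> borel_measurable M) \<and>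
     (\<forall>(n::nat) (ts::nat \<Rightarrow> real) (c::nat \<Rightarrow> real). (\<forall>i<n. ts i \<in> {0..T}) \<longrightarrow>
        centered_gaussian M (\<lambda>\<omega>. \<Sum>i<n. c i * B \<omega> (ts i))
          (\<Sum>i<n. \<Sum>j<n. c i * c j * fbm_cov H (ts i) (ts j)))"

end

theory Submission
  imports Defs
begin

definition ppart :: "real \<Rightarrow> real \<Rightarrow> real set \<Rightarrow> bool" where
  "ppart s t P \<longleftrightarrow> finite P \<and> P \<subseteq> {s..t} \<and> s \<in> P \<and> t \<in> P"

definition nx :: "real set \<Rightarrow> real \<Rightarrow> real" where
  "nx P x = Min {y\<in>P. x < y}"

definition PS :: "(real \<Rightarrow> real \<Rightarrow> real) \<Rightarrow> real \<Rightarrow> real set \<Rightarrow> real" where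
  "PS \<phi> t P = (\<Sum>x\<in>P-{t}. \<phi> x (nx P x))"

definition RS :: "(real \<Rightarrow> real) \<Rightarrow> (real \<Rightarrow> real) \<Rightarrow> real \<Rightarrow> real set \<Rightarrow> real" where
  "RS g b t P = PS (\<lambda>x y. g x * (b y - b x)) t P"

lemma nx_eqI:
  assumes "finite P" "m \<in> P" "x < m" "\<And>y. y \<in> P \<Longrightarrow> x < y \<Longrightarrow> m \<le> y"
  shows "nx P x = m"
  unfolding nx_def using assms by (intro Min_eqI) auto

lemma nx_props:
  assumes "finite P" "z \<in> P" "x < z"
  shows "nx P x \<in> P" "x < nx P x" "nx P x \<le> z" "\<And>y. y \<in> P \<Longrightarrow> x < y \<Longrightarrow> nx P x \<le> y"
proof -
  have f: "finite {y\<in>P. x < y}" "{y\<in>P. x < y} \<noteq> {}" using assms by auto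
  have "nx P x \<in> {y\<in>P. x < y}" unfolding nx_def using f by (rule Min_in)
  then show "nx P x \<in> P" "x < nx P x" by auto
  show "\<And>y. y \<in> P \<Longrightarrow> x < y \<Longrightarrow> nx P x \<le> y" unfolding nx_def using f by (intro Min_le) auto
  then show "nx P x \<le> z" using assms by auto
qed

lemma ppart_nx:
  assumes "ppart s t P" "x \<in> P" "x < t"
  shows "nx P x \<in> P" "x < nx P x" "nx P x \<le> t" "\<And>y. y \<in> P \<Longrightarrow> x < y \<Longrightarrow> nx P x \<le> y"
  using nx_props[of P t x] assms unfolding ppart_def by auto

lemma PS_split:
  assumes "ppart s t P" "c \<in> P"
  shows "PS \<phi> t P = PS \<phi> c (P \<inter> {s..c}) + PS \<phi> t (P \<inter> {c..t})"
proof -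
  have fin: "finite P" using assms unfolding ppart_def by auto
  have ct: "s \<le> c" "c \<le> t" using assms unfolding ppart_def by auto
  have U: "P - {t} = (P \<inter> {s..c} - {c}) \<union> (P \<inter> {c..t} - {t})"
    using assms ct unfolding ppart_def by auto
  have D: "(P \<inter> {s..c} - {c}) \<inter> (P \<inter> {c..t} - {t}) = {}" by auto
  have "PS \<phi> t P = (\<Sum>x\<in>P \<inter> {s..c} - {c}. \<phi> x (nx P x)) + (\<Sum>x\<in>P \<inter> {c..t} - {t}. \<phi> x (nx P x))"
    unfolding PS_def U using fin D by (intro sum.union_disjoint) auto
  also have "(\<Sum>x\<in>P \<inter> {s..c} - {c}. \<phi> x (nx P x)) = PS \<phi> c (P \<inter> {s..c})"
    unfolding PS_def
  proof (rule sum.cong[OF refl])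
    fix x assume x: "x \<in> P \<inter> {s..c} - {c}"
    then have xc: "x < c" by auto
    have "nx (P \<inter> {s..c}) x = nx P x"
      using nx_props[OF fin assms(2) xc] x fin by (intro nx_eqI) auto
    then show "\<phi> x (nx P x) = \<phi> x (nx (P \<inter> {s..c}) x)" by simp
  qed
  also have "(\<Sum>x\<in>P \<inter> {c..t} - {t}. \<phi> x (nx P x)) = PS \<phi> t (P \<inter> {c..t})"
    unfolding PS_def
  proof (rule sum.cong[OF refl])
    fix x assume x: "x \<in> P \<inter> {c..t} - {t}"
    then have xt: "x < t" by auto
    have tP: "t \<in> P" using assms unfolding ppart_def by auto
    have "nx (P \<inter> {c..t}) x = nx P x"
      using nx_props[OF fin tP xt] x fin by (intro nx_eqI) auto
    then show "\<phi> x (nx P x) = \<phi> x (nx (P \<inter> {c..t}) x)" by simp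
  qed
  finally show ?thesis .
qed

lemma ppart_sub:
  assumes "ppart s t P" "c \<in> P"
  shows "ppart s c (P \<inter> {s..c})" "ppart c t (P \<inter> {c..t})"
  using assms unfolding ppart_def by auto

lemma ppart_single: "ppart s s P \<longleftrightarrow> P = {s}"
  unfolding ppart_def by auto

lemma PS_single: "PS \<phi> s {s} = 0"
  unfolding PS_def by simp

lemma PS_two: "s < t \<Longrightarrow> PS \<phi> t {s, t} = \<phi> s t"
proof -
  assume st: "s < t"
  have "nx {s,t} s = t" using st by (intro nx_eqI) auto
  moreover have "{s,t} - {t} = {s}" using st by auto
  ultimately show ?thesis unfolding PS_def by simp
qed

lemma ppart_last:
  assumes "ppart s t P" "s < t"
  obtains t' where "t' \<in> P" "s \<le> t'" "t' < t" "P \<inter> {s..t'} = P - {t}" "P \<inter> {t'..t} = {t', t}"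
    "ppart s t' (P - {t})" "card (P - {t}) < card P"
proof -
  let ?Q = "P - {t}"
  have fin: "finite ?Q" and ne: "?Q \<noteq> {}" using assms unfolding ppart_def by auto
  define t' where "t' = Max ?Q"
  have t'Q: "t' \<in> ?Q" unfolding t'_def using fin ne by (rule Max_in)
  have le: "\<And>y. y \<in> ?Q \<Longrightarrow> y \<le> t'" unfolding t'_def using fin by (rule Max_ge)
  have sQ: "s \<in> ?Q" using assms unfolding ppart_def by auto
  have P: "P \<subseteq> {s..t}" "t \<in> P" "finite P" using assms unfolding ppart_def by auto
  have "t' < t" using t'Q P by force
  moreover have "s \<le> t'" using le[OF sQ] .
  moreover have "P \<inter> {s..t'} = P - {t}" using le P \<open>t' < t\<close> by (auto simp: subset_iff)
  moreover have "P \<inter> {t'..t} = {t', t}" using le P \<open>t' < t\<close> t'Q by (auto simp: subset_iff) force+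
  moreover have "ppart s t' (P - {t})" using le P sQ t'Q unfolding ppart_def by (auto simp: subset_iff)
  moreover have "card (P - {t}) < card P" using P by (meson card_Diff1_less)
  ultimately show ?thesis using that t'Q by auto
qed

lemma PS_last:
  assumes "ppart s t P" "s < t" "t' \<in> P" "P \<inter> {s..t'} = P - {t}" "P \<inter> {t'..t} = {t', t}" "t' < t"
  shows "PS \<phi> t P = PS \<phi> t' (P - {t}) + \<phi> t' t"
  using PS_split[OF assms(1) assms(3), of \<phi>] assms PS_two[of t' t \<phi>] by simp

lemma PS_telescope:
  "ppart s t P \<Longrightarrow> PS (\<lambda>x y. F y - F x) t P = F t - F s"
proof (induction "card P" arbitrary: t P rule: less_induct)
  case less
  show ?case
  proof (cases "s < t")
    case False
    then have "s = t" using less.prems unfolding ppart_def by auto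
    then show ?thesis using less.prems ppart_single PS_single by auto
  next
    case True
    obtain t' where t': "t' \<in> P" "s \<le> t'" "t' < t" "P \<inter> {s..t'} = P - {t}" "P \<inter> {t'..t} = {t', t}"
      "ppart s t' (P - {t})" "card (P - {t}) < card P"
      using ppart_last[OF less.prems True] by blast
    have "PS (\<lambda>x y. F y - F x) t P = PS (\<lambda>x y. F y - F x) t' (P - {t}) + (F t - F t')"
      using PS_last[OF less.prems True t'(1,4,5,3)] by simp
    also have "PS (\<lambda>x y. F y - F x) t' (P - {t}) = F t' - F s"
      using less.hyps[OF t'(7) t'(6)] .
    finally show ?thesis by simp
  qed
qed

lemma nx_strict_mono:
  assumes "ppart s t P" "x \<in> P" "y \<in> P" "x < y" "y < t"
  shows "nx P x < nx P y"
  using ppart_nx[OF assms(1) assms(2)] ppart_nx[OF assms(1) assms(3) assms(5)] assms by force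

lemma PS_remove:
  assumes "ppart s t P" "x \<in> P" "z = nx P x" "z < t" "x < t"
  shows "PS \<phi> t P - PS \<phi> t (P - {z}) = \<phi> x z + \<phi> z (nx P z) - \<phi> x (nx P z)"
proof -
  have fin: "finite P" using assms unfolding ppart_def by auto
  have tP: "t \<in> P" using assms unfolding ppart_def by auto
  have xt: "x < t" using assms by auto
  have xz: "x < z" and zP: "z \<in> P" using ppart_nx[OF assms(1,2) xt] assms by auto
  let ?R = "P - {t, x, z}"
  have e1: "P - {t} = insert x (insert z ?R)" using assms xz xt zP by auto
  have e2: "P - {z} - {t} = insert x ?R" using assms xz xt by auto
  have nzP: "nx P z \<in> P" "z < nx P z" "\<And>y. y \<in> P \<Longrightarrow> z < y \<Longrightarrow> nx P z \<le> y"
    using ppart_nx[OF assms(1) zP assms(4)] by auto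
  have c1: "nx (P - {z}) x = nx P z"
  proof (rule nx_eqI)
    show "finite (P - {z})" using fin by auto
    show "nx P z \<in> P - {z}" using nzP by auto
    show "x < nx P z" using nzP xz by auto
    fix y assume y: "y \<in> P - {z}" "x < y"
    then have "z \<le> y" using ppart_nx(4)[OF assms(1,2) xt] assms by auto
    then have "z < y" using y by auto
    then show "nx P z \<le> y" using nzP y by auto
  qed
  have c2: "nx (P - {z}) y = nx P y" if y: "y \<in> ?R" for y
  proof -
    have yt: "y < t" using y assms unfolding ppart_def by auto
    have yP: "y \<in> P" using y by auto
    have ny: "nx P y \<in> P" "y < nx P y" "\<And>w. w \<in> P \<Longrightarrow> y < w \<Longrightarrow> nx P y \<le> w"
      using ppart_nx[OF assms(1) yP yt] by auto
    have "nx P y \<noteq> z"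
    proof
      assume "nx P y = z"
      moreover have "x \<noteq> y" using y by auto
      ultimately show False
        using nx_strict_mono[OF assms(1) assms(2) yP _ yt] nx_strict_mono[OF assms(1) yP assms(2) _ xt] assms(3)
        by (metis linorder_neqE_linordered_idom order_less_irrefl)
    qed
    then show ?thesis using ny fin by (intro nx_eqI) auto
  qed
  have fR: "finite ?R" using fin by auto
  have "PS \<phi> t P = \<phi> x (nx P x) + (\<phi> z (nx P z) + (\<Sum>y\<in>?R. \<phi> y (nx P y)))"
    unfolding PS_def e1 using fR xz by simp
  moreover have "PS \<phi> t (P - {z}) = \<phi> x (nx P z) + (\<Sum>y\<in>?R. \<phi> y (nx P y))"
    unfolding PS_def e2 using fR c1 c2 by simp
  ultimately show ?thesis using assms(3) by simp
qed

lemma pigeon: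
  fixes f :: "'a \<Rightarrow> real"
  assumes "finite A" "A \<noteq> {}" "sum f A \<le> M"
  shows "\<exists>x\<in>A. f x \<le> M / card A"
proof (rule ccontr)
  assume "\<not> ?thesis"
  then have "\<forall>x\<in>A. M / card A < f x" by auto
  then have "sum (\<lambda>x. M / card A) A < sum f A" using assms by (intro sum_strict_mono) auto
  moreover have "sum (\<lambda>x. M / card A) A = M" using assms by simp
  ultimately show False using assms by simp
qed

definition hold :: "real \<Rightarrow> real \<Rightarrow> real \<Rightarrow> real \<Rightarrow> (real \<Rightarrow> real) \<Rightarrow> bool" where
  "hold \<mu> K a b \<phi> \<longleftrightarrow> (\<forall>x\<in>{a..b}. \<forall>y\<in>{a..b}. \<bar>\<phi> x - \<phi> y\<bar> \<le> K * \<bar>x - y\<bar> powr \<mu>)"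

lemma holdD: "hold \<mu> K a b \<phi> \<Longrightarrow> x \<in> {a..b} \<Longrightarrow> y \<in> {a..b} \<Longrightarrow> \<bar>\<phi> x - \<phi> y\<bar> \<le> K * \<bar>x - y\<bar> powr \<mu>"
  unfolding hold_def by auto

lemma prod_bound:
  fixes g b :: "real \<Rightarrow> real"
  assumes hg: "hold lam Kg s t g" and hb: "hold gam Kb s t b" and K: "0 \<le> Kg" "0 \<le> Kb"
    and pos: "0 < lam" "0 < gam"
    and pts: "s \<le> x" "x \<le> z" "z \<le> w" "w \<le> t"
  shows "\<bar>(g z - g x) * (b w - b z)\<bar> \<le> Kg * Kb * (w - x) powr (lam + gam)"
proof -
  have "\<bar>g z - g x\<bar> \<le> Kg * \<bar>z - x\<bar> powr lam" using holdD[OF hg, of z x] pts by auto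
  also have "\<dots> \<le> Kg * (w - x) powr lam" using pts K pos by (intro mult_left_mono powr_mono2) auto
  finally have 1: "\<bar>g z - g x\<bar> \<le> Kg * (w - x) powr lam" .
  have "\<bar>b w - b z\<bar> \<le> Kb * \<bar>w - z\<bar> powr gam" using holdD[OF hb, of w z] pts by auto
  also have "\<dots> \<le> Kb * (w - x) powr gam" using pts K pos by (intro mult_left_mono powr_mono2) auto
  finally have 2: "\<bar>b w - b z\<bar> \<le> Kb * (w - x) powr gam" .
  have "\<bar>(g z - g x) * (b w - b z)\<bar> \<le> (Kg * (w - x) powr lam) * (Kb * (w - x) powr gam)"
    unfolding abs_mult using 1 2 by (intro mult_mono) auto
  also have "\<dots> = Kg * Kb * (w - x) powr (lam + gam)" by (simp add: powr_add)
  finally show ?thesis .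
qed

lemma sum_nx_diff:
  assumes "ppart s t P"
  shows "(\<Sum>x\<in>P-{t}. nx P x - x) = t - s"
  using PS_telescope[OF assms, of "\<lambda>x. x"] unfolding PS_def by simp

lemma YL_aux:
  fixes g b :: "real \<Rightarrow> real"
  assumes hg: "hold lam Kg s t g" and hb: "hold gam Kb s t b" and K: "0 \<le> Kg" "0 \<le> Kb"
    and pos: "0 < lam" "0 < gam"
  shows "ppart s t P \<Longrightarrow> \<bar>RS g b t P - g s * (b t - b s)\<bar> \<le>
      Kg * Kb * (2 * (t - s)) powr (lam + gam) * (\<Sum>m\<in>{1..card P - 2}. real m powr (-(lam + gam)))"
proof (induction "card P" arbitrary: P rule: less_induct)
  case less
  have pp: "ppart s t P" by fact
  have fin: "finite P" and sub: "P \<subseteq> {s..t}" and sP: "s \<in> P" and tP: "t \<in> P"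
    using pp unfolding ppart_def by auto
  have st: "s \<le> t" using sP sub by auto
  have Rnn: "0 \<le> Kg * Kb * (2 * (t - s)) powr (lam + gam) * (\<Sum>m\<in>{1..card P - 2}. real m powr (-(lam + gam)))"
    using K by (intro mult_nonneg_nonneg sum_nonneg) auto
  show ?case
  proof (cases "card P \<le> 2")
    case True
    show ?thesis
    proof (cases "s = t")
      case True
      then have "P = {s}" using pp ppart_single by auto
      then show ?thesis using Rnn True unfolding RS_def by (simp add: PS_single)
    next
      case False
      then have slt: "s < t" using st by auto
      have "{s, t} \<subseteq> P" using sP tP by auto
      moreover have "card {s, t} = 2" using slt by auto
      ultimately have "P = {s, t}" using True fin by (metis card_seteq)
      then have "RS g b t P = g s * (b t - b s)" unfolding RS_def using PS_two[OF slt] by simp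
      then show ?thesis using Rnn by simp
    qed
  next
    case False
    define k where "k = card P - 2"
    have k1: "1 \<le> k" using False unfolding k_def by auto
    have slt: "s < t"
    proof (rule ccontr)
      assume "\<not> s < t"
      then have "P = {s}" using st pp ppart_single by auto
      then show False using False by auto
    qed
    obtain t' where t': "t' \<in> P" "s \<le> t'" "t' < t" "P \<inter> {s..t'} = P - {t}" "P \<inter> {t'..t} = {t', t}"
      "ppart s t' (P - {t})" "card (P - {t}) < card P"
      using ppart_last[OF pp slt] by blast
    define A where "A = {x\<in>P-{t}. nx P x < t}"
    have finA: "finite A" unfolding A_def using fin by auto
    have AP: "A \<subseteq> P - {t}" unfolding A_def by auto
    have sup: "P - {t} - {t'} \<subseteq> A"
    proof
      fix x assume x: "x \<in> P - {t} - {t'}"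
      then have "x \<in> P \<inter> {s..t'}" using t'(4) by auto
      then have xt': "x < t'" using x by auto
      have "nx P x \<le> t'" using ppart_nx(4)[OF pp _ _ t'(1)] x xt' t'(3) by auto
      then show "x \<in> A" unfolding A_def using x t'(3) by auto
    qed
    have "card (P - {t} - {t'}) = k" unfolding k_def using fin tP t'(1) t'(3) by (simp add: card_Diff_singleton)
    then have cA: "k \<le> card A" using card_mono[OF finA sup] by simp
    then have Ane: "A \<noteq> {}" using k1 by auto
    have xA: "x \<in> P" "x < t" "nx P x < t" if "x \<in> A" for x
      using that sub unfolding A_def by auto
    have nnP: "0 \<le> nx P x - x" if "x \<in> P - {t}" for x
      using ppart_nx(2)[OF pp, of x] that sub by fastforce
    have injA: "inj_on (nx P) A"
    proof (rule inj_onI)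
      fix x y assume xy: "x \<in> A" "y \<in> A" "nx P x = nx P y"
      show "x = y"
      proof (rule ccontr)
        assume "x \<noteq> y"
        then consider "x < y" | "y < x" by linarith
        then show False
          using nx_strict_mono[OF pp, of x y] nx_strict_mono[OF pp, of y x] xA[OF xy(1)] xA[OF xy(2)] xy(3)
          by cases auto
      qed
    qed
    have S1: "(\<Sum>x\<in>A. nx P x - x) \<le> t - s"
    proof -
      have "(\<Sum>x\<in>A. nx P x - x) \<le> (\<Sum>x\<in>P-{t}. nx P x - x)"
        using fin AP nnP by (intro sum_mono2) auto
      then show ?thesis using sum_nx_diff[OF pp] by simp
    qed
    have S2: "(\<Sum>x\<in>A. nx P (nx P x) - nx P x) \<le> t - s"
    proof -
      have "(\<Sum>x\<in>A. nx P (nx P x) - nx P x) = (\<Sum>y\<in>nx P ` A. nx P y - y)"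
        using sum.reindex[OF injA, of "\<lambda>y. nx P y - y"] by simp
      also have "\<dots> \<le> (\<Sum>x\<in>P-{t}. nx P x - x)"
      proof (rule sum_mono2)
        show "finite (P - {t})" using fin by auto
        show "nx P ` A \<subseteq> P - {t}" using xA ppart_nx(1)[OF pp] by fastforce
        show "\<And>b. b \<in> P - {t} - nx P ` A \<Longrightarrow> 0 \<le> nx P b - b" using nnP by auto
      qed
      finally show ?thesis using sum_nx_diff[OF pp] by simp
    qed
    have "(\<Sum>x\<in>A. nx P (nx P x) - x) = (\<Sum>x\<in>A. nx P (nx P x) - nx P x) + (\<Sum>x\<in>A. nx P x - x)"
      by (simp add: sum.distrib[symmetric])
    then have "(\<Sum>x\<in>A. nx P (nx P x) - x) \<le> 2 * (t - s)" using S1 S2 by simp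
    then obtain x where x: "x \<in> A" "nx P (nx P x) - x \<le> 2 * (t - s) / card A"
      using pigeon[OF finA Ane] by blast
    have "2 * (t - s) / card A \<le> 2 * (t - s) / k"
      using cA k1 slt by (intro divide_left_mono) auto
    with x have xw: "nx P (nx P x) - x \<le> 2 * (t - s) / k" by simp
    define z where "z = nx P x"
    define w where "w = nx P z"
    have xP: "x \<in> P" "x < t" and zt: "z < t" using xA[OF x(1)] unfolding z_def by auto
    have xz: "x < z" "z \<in> P" using ppart_nx[OF pp xP] unfolding z_def by auto
    have zw: "z < w" "w \<in> P" "w \<le> t" using ppart_nx[OF pp xz(2) zt] unfolding w_def by auto
    have xs: "s \<le> x" using xP sub by auto
    have rem: "RS g b t P - RS g b t (P - {z}) = (g z - g x) * (b w - b z)"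
      unfolding RS_def using PS_remove[OF pp xP(1) z_def zt xP(2), of "\<lambda>x y. g x * (b y - b x)"]
      unfolding w_def by (simp add: algebra_simps)
    have pp': "ppart s t (P - {z})" using pp xz xs zt unfolding ppart_def by auto
    have cz: "card (P - {z}) < card P" using fin xz(2) by (meson card_Diff1_less)
    have cz2: "card (P - {z}) - 2 = k - 1" unfolding k_def using fin xz(2) by (simp add: card_Diff_singleton)
    have IH: "\<bar>RS g b t (P - {z}) - g s * (b t - b s)\<bar> \<le>
      Kg * Kb * (2 * (t - s)) powr (lam + gam) * (\<Sum>m\<in>{1..k - 1}. real m powr (-(lam + gam)))"
      using less.hyps[OF cz pp'] cz2 by simp
    have "\<bar>(g z - g x) * (b w - b z)\<bar> \<le> Kg * Kb * (w - x) powr (lam + gam)"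
      using prod_bound[OF hg hb K pos xs] xz zw by auto
    also have "\<dots> \<le> Kg * Kb * (2 * (t - s) / k) powr (lam + gam)"
      using K pos xz zw xw unfolding w_def z_def by (intro mult_left_mono powr_mono2) auto
    also have "\<dots> = Kg * Kb * (2 * (t - s)) powr (lam + gam) * real k powr (-(lam + gam))"
      using slt k1 powr_minus_divide[of "real k" "lam + gam"] by (simp add: powr_divide)
    finally have D: "\<bar>(g z - g x) * (b w - b z)\<bar> \<le> Kg * Kb * (2 * (t - s)) powr (lam + gam) * real k powr (-(lam + gam))" .
    have sk: "(\<Sum>m\<in>{1..k}. real m powr (-(lam + gam))) = (\<Sum>m\<in>{1..k - 1}. real m powr (-(lam + gam))) + real k powr (-(lam + gam))"
    proof -
      obtain j where j: "k = Suc j" using k1 by (cases k) auto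
      show ?thesis unfolding j by (simp add: sum.cl_ivl_Suc)
    qed
    have "\<bar>RS g b t P - g s * (b t - b s)\<bar> \<le> \<bar>RS g b t (P - {z}) - g s * (b t - b s)\<bar> + \<bar>(g z - g x) * (b w - b z)\<bar>"
      using rem by linarith
    also have "\<dots> \<le> Kg * Kb * (2 * (t - s)) powr (lam + gam) * (\<Sum>m\<in>{1..k}. real m powr (-(lam + gam)))"
      using IH D unfolding sk by (simp add: algebra_simps)
    finally show ?thesis unfolding k_def .
  qed
qed


definition CY :: "real \<Rightarrow> real" where
  "CY \<theta> = 2 powr \<theta> * suminf (\<lambda>n. real n powr (-\<theta>))"

lemma summable_pw: "1 < \<theta> \<Longrightarrow> summable (\<lambda>n. real n powr (-\<theta>))"
  using summable_real_powr_iff[of "-\<theta>"] by simp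

lemma CY_nonneg: "1 < \<theta> \<Longrightarrow> 0 \<le> CY \<theta>"
  unfolding CY_def using summable_pw by (intro mult_nonneg_nonneg suminf_nonneg) auto

lemma hold_sub: "hold \<mu> K a b \<phi> \<Longrightarrow> a \<le> a' \<Longrightarrow> b' \<le> b \<Longrightarrow> hold \<mu> K a' b' \<phi>"
  unfolding hold_def by auto

lemma YL:
  fixes g b :: "real \<Rightarrow> real"
  assumes hg: "hold lam Kg s t g" and hb: "hold gam Kb s t b" and K: "0 \<le> Kg" "0 \<le> Kb"
    and pos: "0 < lam" "0 < gam" "1 < lam + gam" and pp: "ppart s t P"
  shows "\<bar>RS g b t P - g s * (b t - b s)\<bar> \<le> CY (lam + gam) * Kg * Kb * (t - s) powr (lam + gam)"
proof -
  let ?\<theta> = "lam + gam"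
  have st: "s \<le> t" using pp unfolding ppart_def by auto
  have "(\<Sum>m\<in>{1..card P - 2}. real m powr (-?\<theta>)) \<le> suminf (\<lambda>n. real n powr (-?\<theta>))"
    using summable_pw[OF pos(3)] by (intro sum_le_suminf) auto
  then have "Kg * Kb * (2 * (t - s)) powr ?\<theta> * (\<Sum>m\<in>{1..card P - 2}. real m powr (-?\<theta>))
      \<le> Kg * Kb * (2 * (t - s)) powr ?\<theta> * suminf (\<lambda>n. real n powr (-?\<theta>))"
    using K by (intro mult_left_mono) auto
  also have "\<dots> = CY ?\<theta> * Kg * Kb * (t - s) powr ?\<theta>"
    unfolding CY_def using powr_mult[of 2 "t - s" ?\<theta>] st by simp
  finally show ?thesis using YL_aux[OF hg hb K pos(1,2) pp] by linarith
qed

lemma RS_split: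
  assumes "ppart s t P" "c \<in> P"
  shows "RS g b t P = RS g b c (P \<inter> {s..c}) + RS g b t (P \<inter> {c..t})"
  unfolding RS_def by (rule PS_split[OF assms])

lemma PS_abs_le:
  assumes "\<And>x. x \<in> P - {t} \<Longrightarrow> \<bar>\<phi> x (nx P x)\<bar> \<le> \<psi> x (nx P x)"
  shows "\<bar>PS \<phi> t P\<bar> \<le> PS \<psi> t P"
  unfolding PS_def by (rule order_trans[OF sum_abs]) (use assms in \<open>auto intro: sum_mono\<close>)

lemma PS_diff: "PS (\<lambda>x y. \<phi> x y - \<psi> x y) t P = PS \<phi> t P - PS \<psi> t P"
  unfolding PS_def by (simp add: sum_subtractf)

lemma refine:
  fixes g b :: "real \<Rightarrow> real"
  assumes K: "0 \<le> Kg" "0 \<le> Kb" and pos: "0 < lam" "0 < gam" "1 < lam + gam"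
  shows "ppart s t P \<Longrightarrow> ppart s t R \<Longrightarrow> P \<subseteq> R \<Longrightarrow> hold lam Kg s t g \<Longrightarrow> hold gam Kb s t b \<Longrightarrow>
    \<bar>RS g b t R - RS g b t P\<bar> \<le> CY (lam + gam) * Kg * Kb * PS (\<lambda>x y. (y - x) powr (lam + gam)) t P"
proof (induction "card P" arbitrary: t P R rule: less_induct)
  case less
  have st: "s \<le> t" using less.prems unfolding ppart_def by auto
  show ?case
  proof (cases "s = t")
    case True
    then have "P = {s}" "R = {s}" using less.prems ppart_single by auto
    then show ?thesis using True by (simp add: RS_def PS_single)
  next
    case False
    then have slt: "s < t" using st by auto
    obtain t' where t': "t' \<in> P" "s \<le> t'" "t' < t" "P \<inter> {s..t'} = P - {t}" "P \<inter> {t'..t} = {t', t}"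
      "ppart s t' (P - {t})" "card (P - {t}) < card P"
      using ppart_last[OF less.prems(1) slt] by blast
    have t'R: "t' \<in> R" using t' less.prems by auto
    have e1: "RS g b t R = RS g b t' (R \<inter> {s..t'}) + RS g b t (R \<inter> {t'..t})"
      by (rule RS_split[OF less.prems(2) t'R])
    have e2: "RS g b t P = RS g b t' (P - {t}) + g t' * (b t - b t')"
      unfolding RS_def using PS_last[OF less.prems(1) slt t'(1,4,5,3)] .
    have e3: "PS (\<lambda>x y. (y - x) powr (lam + gam)) t P = PS (\<lambda>x y. (y - x) powr (lam + gam)) t' (P - {t}) + (t - t') powr (lam + gam)"
      using PS_last[OF less.prems(1) slt t'(1,4,5,3)] .
    have IH: "\<bar>RS g b t' (R \<inter> {s..t'}) - RS g b t' (P - {t})\<bar> \<le> CY (lam + gam) * Kg * Kb * PS (\<lambda>x y. (y - x) powr (lam + gam)) t' (P - {t})"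
    proof (rule less.hyps[OF t'(7) t'(6)])
      show "ppart s t' (R \<inter> {s..t'})" using ppart_sub(1)[OF less.prems(2) t'R] .
      show "P - {t} \<subseteq> R \<inter> {s..t'}" using t'(4) less.prems(3) by auto
      show "hold lam Kg s t' g" "hold gam Kb s t' b" using less.prems(4,5) t' by (auto intro: hold_sub)
    qed
    have Y: "\<bar>RS g b t (R \<inter> {t'..t}) - g t' * (b t - b t')\<bar> \<le> CY (lam + gam) * Kg * Kb * (t - t') powr (lam + gam)"
      using YL[OF hold_sub[OF less.prems(4)] hold_sub[OF less.prems(5)] K pos ppart_sub(2)[OF less.prems(2) t'R]] t' by auto
    show ?thesis using IH Y unfolding e1 e2 e3 by (simp add: algebra_simps)
  qed
qed

definition fmesh :: "real set \<Rightarrow> real \<Rightarrow> real \<Rightarrow> bool" where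
  "fmesh P t \<delta> \<longleftrightarrow> (\<forall>x\<in>P-{t}. nx P x - x < \<delta>)"

lemma PS_pow_fine:
  assumes pp: "ppart s t P" and f: "fmesh P t \<delta>" and th: "1 \<le> \<theta>"
  shows "PS (\<lambda>x y. (y - x) powr \<theta>) t P \<le> \<delta> powr (\<theta> - 1) * (t - s)"
proof -
  have sub: "P \<subseteq> {s..t}" using pp unfolding ppart_def by auto
  have "PS (\<lambda>x y. (y - x) powr \<theta>) t P \<le> (\<Sum>x\<in>P-{t}. \<delta> powr (\<theta> - 1) * (nx P x - x))"
    unfolding PS_def
  proof (rule sum_mono)
    fix x assume x: "x \<in> P - {t}"
    then have xt: "x < t" using sub by fastforce
    have pos: "0 < nx P x - x" using ppart_nx(2)[OF pp _ xt] x by auto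
    have "(nx P x - x) powr (\<theta> - 1) * (nx P x - x) = (nx P x - x) powr (\<theta> - 1 + 1)"
      using pos powr_add[of "nx P x - x" "\<theta> - 1" 1] by simp
    then have "(nx P x - x) powr \<theta> = (nx P x - x) powr (\<theta> - 1) * (nx P x - x)" by simp
    also have "\<dots> \<le> \<delta> powr (\<theta> - 1) * (nx P x - x)"
      using pos f x th unfolding fmesh_def by (intro mult_right_mono powr_mono2) (auto intro: less_imp_le)
    finally show "(nx P x - x) powr \<theta> \<le> \<delta> powr (\<theta> - 1) * (nx P x - x)" .
  qed
  also have "\<dots> = \<delta> powr (\<theta> - 1) * (t - s)"
    using sum_nx_diff[OF pp] by (simp add: sum_distrib_left[symmetric])
  finally show ?thesis .
qed

lemma cauchy_pp:
  fixes g b :: "real \<Rightarrow> real"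
  assumes hg: "hold lam Kg s t g" and hb: "hold gam Kb s t b" and K: "0 \<le> Kg" "0 \<le> Kb"
    and pos: "0 < lam" "0 < gam" "1 < lam + gam"
    and P: "ppart s t P" "fmesh P t \<delta>" and Q: "ppart s t Q" "fmesh Q t \<delta>"
  shows "\<bar>RS g b t P - RS g b t Q\<bar> \<le> 2 * CY (lam + gam) * Kg * Kb * \<delta> powr (lam + gam - 1) * (t - s)"
proof -
  have R: "ppart s t (P \<union> Q)" using P Q unfolding ppart_def by auto
  have C: "0 \<le> CY (lam + gam) * Kg * Kb" using CY_nonneg[OF pos(3)] K by auto
  have "\<bar>RS g b t (P \<union> Q) - RS g b t P\<bar> \<le> CY (lam + gam) * Kg * Kb * PS (\<lambda>x y. (y - x) powr (lam + gam)) t P"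
    using refine[OF K pos P(1) R _ hg hb] by auto
  also have "\<dots> \<le> CY (lam + gam) * Kg * Kb * (\<delta> powr (lam + gam - 1) * (t - s))"
    using PS_pow_fine[OF P] pos C by (intro mult_left_mono) auto
  finally have 1: "\<bar>RS g b t (P \<union> Q) - RS g b t P\<bar> \<le> CY (lam + gam) * Kg * Kb * (\<delta> powr (lam + gam - 1) * (t - s))" .
  have "\<bar>RS g b t (P \<union> Q) - RS g b t Q\<bar> \<le> CY (lam + gam) * Kg * Kb * PS (\<lambda>x y. (y - x) powr (lam + gam)) t Q"
    using refine[OF K pos Q(1) R _ hg hb] by auto
  also have "\<dots> \<le> CY (lam + gam) * Kg * Kb * (\<delta> powr (lam + gam - 1) * (t - s))"
    using PS_pow_fine[OF Q] pos C by (intro mult_left_mono) auto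
  finally have 2: "\<bar>RS g b t (P \<union> Q) - RS g b t Q\<bar> \<le> CY (lam + gam) * Kg * Kb * (\<delta> powr (lam + gam - 1) * (t - s))" .
  show ?thesis using 1 2 by (simp add: algebra_simps)
qed

definition grid :: "real \<Rightarrow> real \<Rightarrow> nat \<Rightarrow> real set" where
  "grid s t n = (\<lambda>k. s + real k * (t - s) / real (Suc n)) ` {0..Suc n}"

lemma grid_ppart: "s \<le> t \<Longrightarrow> ppart s t (grid s t n)"
proof -
  assume st: "s \<le> t"
  have "s + real k * (t - s) / real (Suc n) \<le> t" if "k \<le> Suc n" for k
  proof -
    have "real k * (t - s) \<le> real (Suc n) * (t - s)" using that st by (intro mult_right_mono) auto
    then have "real k * (t - s) / real (Suc n) \<le> real (Suc n) * (t - s) / real (Suc n)"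
      by (intro divide_right_mono) auto
    then have "real k * (t - s) / real (Suc n) \<le> t - s" by simp
    then show ?thesis by simp
  qed
  moreover have "s \<le> s + real k * (t - s) / real (Suc n)" for k using st by simp
  moreover have "t \<in> grid s t n" unfolding grid_def by (rule image_eqI[of _ _ "Suc n"]) auto
  moreover have "s \<in> grid s t n" unfolding grid_def by (rule image_eqI[of _ _ 0]) auto
  ultimately show ?thesis unfolding ppart_def grid_def by auto
qed

lemma grid_fine:
  assumes st: "s \<le> t" and d: "(t - s) / real (Suc n) < \<delta>"
  shows "fmesh (grid s t n) t \<delta>"
  unfolding fmesh_def
proof
  fix x assume x: "x \<in> grid s t n - {t}"
  then obtain k where k: "k \<le> Suc n" "x = s + real k * (t - s) / real (Suc n)" unfolding grid_def by auto
  have kn: "k \<noteq> Suc n" using x k by auto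
  have pp: "ppart s t (grid s t n)" using grid_ppart[OF st] .
  have xt: "x < t" using x pp unfolding ppart_def by fastforce
  then have slt: "s < t" using x pp unfolding ppart_def by auto
  let ?y = "s + real (Suc k) * (t - s) / real (Suc n)"
  have yG: "?y \<in> grid s t n" unfolding grid_def by (rule image_eqI[of _ _ "Suc k"]) (use k kn in auto)
  have "?y = x + (t - s) / real (Suc n)" using k by (simp add: field_simps)
  then have xy: "x < ?y" using slt by simp
  have "nx (grid s t n) x \<le> ?y" using ppart_nx(4)[OF pp _ xt yG xy] x by auto
  then show "nx (grid s t n) x - x < \<delta>" using \<open>?y = x + (t - s) / real (Suc n)\<close> d by simp
qed

lemma grid_ev:
  assumes "s \<le> t" "0 < \<delta>"
  shows "\<exists>N. \<forall>n\<ge>N. fmesh (grid s t n) t \<delta>"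
proof -
  obtain N :: nat where N: "(t - s) / \<delta> < real N" using reals_Archimedean2 by blast
  have "fmesh (grid s t n) t \<delta>" if "n \<ge> N" for n
  proof (rule grid_fine[OF assms(1)])
    have "t - s < real N * \<delta>" using N assms by (simp add: divide_less_eq)
    also have "\<dots> \<le> real (Suc n) * \<delta>" using that assms by (intro mult_right_mono) auto
    finally show "(t - s) / real (Suc n) < \<delta>" by (simp add: divide_less_eq algebra_simps)
  qed
  then show ?thesis by blast
qed

lemma small_delta:
  fixes C \<epsilon> \<theta> :: real
  assumes "0 \<le> C" "0 < \<epsilon>" "1 < \<theta>"
  shows "\<exists>\<delta>>0. C * \<delta> powr (\<theta> - 1) < \<epsilon>"
proof -
  define \<delta> where "\<delta> = (\<epsilon> / (C + 1)) powr (1 / (\<theta> - 1))"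
  have pos: "0 < \<epsilon> / (C + 1)" using assms by auto
  have "\<delta> powr (\<theta> - 1) = \<epsilon> / (C + 1)" unfolding \<delta>_def
    using pos assms powr_powr[of "\<epsilon> / (C + 1)" "1 / (\<theta> - 1)" "\<theta> - 1"] by simp
  moreover have "C * (\<epsilon> / (C + 1)) < \<epsilon>" using assms by (simp add: field_simps)
  moreover have "0 < \<delta>" unfolding \<delta>_def using pos by (simp only: powr_gt_zero)
  ultimately show ?thesis by auto
qed

definition conv :: "(real \<Rightarrow> real) \<Rightarrow> (real \<Rightarrow> real) \<Rightarrow> real \<Rightarrow> real \<Rightarrow> real \<Rightarrow> bool" where
  "conv g b s t I \<longleftrightarrow> (\<forall>\<epsilon>>0. \<exists>\<delta>>0. \<forall>P. ppart s t P \<and> fmesh P t \<delta> \<longrightarrow> \<bar>RS g b t P - I\<bar> < \<epsilon>)"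

definition yint :: "(real \<Rightarrow> real) \<Rightarrow> (real \<Rightarrow> real) \<Rightarrow> real \<Rightarrow> real \<Rightarrow> real" where
  "yint g b s t = lim (\<lambda>n. RS g b t (grid s t n))"

lemma conv_grid:
  assumes "conv g b s t I" "s \<le> t"
  shows "(\<lambda>n. RS g b t (grid s t n)) \<longlonglongrightarrow> I"
proof (rule LIMSEQ_I)
  fix r :: real assume r: "0 < r"
  obtain \<delta> where d: "\<delta> > 0" "\<And>P. ppart s t P \<and> fmesh P t \<delta> \<Longrightarrow> \<bar>RS g b t P - I\<bar> < r"
    using assms(1) r unfolding conv_def by blast
  obtain N where "\<forall>n\<ge>N. fmesh (grid s t n) t \<delta>" using grid_ev[OF assms(2) d(1)] by blast
  then show "\<exists>N. \<forall>n\<ge>N. norm (RS g b t (grid s t n) - I) < r"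
    using d(2) grid_ppart[OF assms(2)] by auto
qed

lemma conv_yint:
  assumes "conv g b s t I" "s \<le> t"
  shows "yint g b s t = I"
  unfolding yint_def using conv_grid[OF assms] by (rule limI)

lemma conv_exists:
  fixes g b :: "real \<Rightarrow> real"
  assumes hg: "hold lam Kg s t g" and hb: "hold gam Kb s t b" and K: "0 \<le> Kg" "0 \<le> Kb"
    and pos: "0 < lam" "0 < gam" "1 < lam + gam" and st: "s \<le> t"
  shows "conv g b s t (yint g b s t)"
proof -
  define C0 where "C0 = 2 * CY (lam + gam) * Kg * Kb * (t - s)"
  have C0: "0 \<le> C0" unfolding C0_def using CY_nonneg[OF pos(3)] K st by auto
  have cp: "\<bar>RS g b t P - RS g b t Q\<bar> \<le> C0 * \<delta> powr (lam + gam - 1)"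
    if "ppart s t P" "fmesh P t \<delta>" "ppart s t Q" "fmesh Q t \<delta>" for P Q \<delta>
    using cauchy_pp[OF hg hb K pos that] unfolding C0_def by (simp add: algebra_simps)
  let ?S = "\<lambda>n. RS g b t (grid s t n)"
  have "Cauchy ?S"
  proof (rule metric_CauchyI)
    fix e :: real assume e: "0 < e"
    obtain \<delta> where d: "\<delta> > 0" "C0 * \<delta> powr (lam + gam - 1) < e" using small_delta[OF C0 e pos(3)] by blast
    obtain N where N: "\<forall>n\<ge>N. fmesh (grid s t n) t \<delta>" using grid_ev[OF st d(1)] by blast
    show "\<exists>M. \<forall>m\<ge>M. \<forall>n\<ge>M. dist (?S m) (?S n) < e"
    proof (intro exI allI impI)
      fix m n assume "N \<le> m" "N \<le> n"
      then show "dist (?S m) (?S n) < e" unfolding dist_real_def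
        using cp[OF grid_ppart[OF st] _ grid_ppart[OF st], of m \<delta> n] N d by fastforce
    qed
  qed
  then have "convergent ?S" by (simp add: Cauchy_convergent_iff)
  then have L: "?S \<longlonglongrightarrow> yint g b s t" unfolding yint_def by (simp add: convergent_LIMSEQ_iff)
  show ?thesis unfolding conv_def
  proof (intro allI impI)
    fix e :: real assume e: "0 < e"
    obtain \<delta> where d: "\<delta> > 0" "C0 * \<delta> powr (lam + gam - 1) < e / 2" using small_delta[OF C0 _ pos(3), of "e/2"] e by auto
    obtain N where N: "\<forall>n\<ge>N. fmesh (grid s t n) t \<delta>" using grid_ev[OF st d(1)] by blast
    obtain N2 where N2: "\<forall>n\<ge>N2. norm (?S n - yint g b s t) < e / 2" using LIMSEQ_D[OF L, of "e/2"] e by auto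
    let ?n = "max N N2"
    have "\<forall>P. ppart s t P \<and> fmesh P t \<delta> \<longrightarrow> \<bar>RS g b t P - yint g b s t\<bar> < e"
    proof (intro allI impI)
      fix P assume P: "ppart s t P \<and> fmesh P t \<delta>"
      have "\<bar>RS g b t P - ?S ?n\<bar> \<le> C0 * \<delta> powr (lam + gam - 1)"
        using cp[of P \<delta> "grid s t ?n"] P N grid_ppart[OF st] by auto
      moreover have "\<bar>?S ?n - yint g b s t\<bar> < e / 2" using N2 by auto
      ultimately show "\<bar>RS g b t P - yint g b s t\<bar> < e" using d by linarith
    qed
    then show "\<exists>\<delta>>0. \<forall>P. ppart s t P \<and> fmesh P t \<delta> \<longrightarrow> \<bar>RS g b t P - yint g b s t\<bar> < e" using d by blast
  qed
qed

lemma yint_single: "yint g b s s = 0"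
proof -
  have "grid s s n = {s}" for n using grid_ppart[of s s n] ppart_single by auto
  then have "RS g b s (grid s s n) = 0" for n by (simp add: RS_def PS_single)
  then show ?thesis unfolding yint_def by simp
qed

lemma nx_restrict:
  assumes pp: "ppart s t P" and c: "c \<in> P" and x: "x \<in> P"
  shows "x < c \<Longrightarrow> nx (P \<inter> {s..c}) x = nx P x"
    and "c \<le> x \<Longrightarrow> x < t \<Longrightarrow> nx (P \<inter> {c..t}) x = nx P x"
proof -
  have fin: "finite P" and tP: "t \<in> P" using pp unfolding ppart_def by auto
  show "x < c \<Longrightarrow> nx (P \<inter> {s..c}) x = nx P x"
    using nx_props[OF fin c, of x] x fin pp unfolding ppart_def by (intro nx_eqI) auto
  show "c \<le> x \<Longrightarrow> x < t \<Longrightarrow> nx (P \<inter> {c..t}) x = nx P x"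
    using nx_props[OF fin tP, of x] x fin pp unfolding ppart_def by (intro nx_eqI) auto
qed

lemma fmesh_split:
  assumes pp: "ppart s t P" and c: "c \<in> P"
    and f1: "fmesh (P \<inter> {s..c}) c \<delta>" and f2: "fmesh (P \<inter> {c..t}) t \<delta>"
  shows "fmesh P t \<delta>"
  unfolding fmesh_def
proof
  fix x assume x: "x \<in> P - {t}"
  have sub: "P \<subseteq> {s..t}" using pp unfolding ppart_def by auto
  show "nx P x - x < \<delta>"
  proof (cases "x < c")
    case True
    have xs: "s \<le> x" "x \<in> P" using x sub by auto
    then have "x \<in> P \<inter> {s..c} - {c}" using True by auto
    then have "nx (P \<inter> {s..c}) x - x < \<delta>" using f1 unfolding fmesh_def by blast
    then show ?thesis using nx_restrict(1)[OF pp c xs(2) True] by simp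
  next
    case False
    have xs: "x \<le> t" "x \<in> P" "x \<noteq> t" using x sub by auto
    then have xt: "x < t" by simp
    then have "x \<in> P \<inter> {c..t} - {t}" using False xs by auto
    then have "nx (P \<inter> {c..t}) x - x < \<delta>" using f2 unfolding fmesh_def by blast
    then show ?thesis using nx_restrict(2)[OF pp c xs(2) _ xt] False by simp
  qed
qed

lemma fmesh_mono: "fmesh P t \<delta> \<Longrightarrow> \<delta> \<le> \<delta>' \<Longrightarrow> fmesh P t \<delta>'"
  unfolding fmesh_def by force

lemma eq_by_eps:
  fixes x :: real
  assumes "\<And>e. 0 < e \<Longrightarrow> \<bar>x\<bar> < 3 * e"
  shows "x = 0"
proof (rule ccontr)
  assume "x \<noteq> 0"
  then have "0 < \<bar>x\<bar> / 3" by auto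
  from assms[OF this] show False by simp
qed

lemma conv_add:
  assumes c1: "conv g b s u I1" and c2: "conv g b u t I2" and c: "conv g b s t I"
    and su: "s \<le> u" and ut: "u \<le> t"
  shows "I = I1 + I2"
proof -
  have "I - (I1 + I2) = 0"
  proof (rule eq_by_eps)
    fix e :: real assume e: "0 < e"
    obtain d1 where d1: "d1 > 0" "\<And>P. ppart s u P \<and> fmesh P u d1 \<Longrightarrow> \<bar>RS g b u P - I1\<bar> < e"
      using c1 e unfolding conv_def by blast
    obtain d2 where d2: "d2 > 0" "\<And>P. ppart u t P \<and> fmesh P t d2 \<Longrightarrow> \<bar>RS g b t P - I2\<bar> < e"
      using c2 e unfolding conv_def by blast
    obtain d3 where d3: "d3 > 0" "\<And>P. ppart s t P \<and> fmesh P t d3 \<Longrightarrow> \<bar>RS g b t P - I\<bar> < e"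
      using c e unfolding conv_def by blast
    define d where "d = min d1 (min d2 d3)"
    have d: "d > 0" using d1 d2 d3 unfolding d_def by auto
    obtain N1 where N1: "\<forall>n\<ge>N1. fmesh (grid s u n) u d" using grid_ev[OF su d] by blast
    obtain N2 where N2: "\<forall>n\<ge>N2. fmesh (grid u t n) t d" using grid_ev[OF ut d] by blast
    define n where "n = max N1 N2"
    define P1 where "P1 = grid s u n"
    define P2 where "P2 = grid u t n"
    have p1: "ppart s u P1" "fmesh P1 u d" unfolding P1_def using grid_ppart[OF su] N1 n_def by auto
    have p2: "ppart u t P2" "fmesh P2 t d" unfolding P2_def using grid_ppart[OF ut] N2 n_def by auto
    define P where "P = P1 \<union> P2"
    have pp: "ppart s t P" using p1 p2 su ut unfolding P_def ppart_def by auto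
    have uP: "u \<in> P" using p1 unfolding P_def ppart_def by auto
    have e1: "P \<inter> {s..u} = P1"
    proof (intro set_eqI iffI)
      fix x assume x: "x \<in> P \<inter> {s..u}"
      show "x \<in> P1"
      proof (cases "x \<in> P1")
        case False
        then have "x \<in> P2" using x P_def by auto
        then have "u \<le> x" using p2 unfolding ppart_def by auto
        then have "x = u" using x by auto
        then show ?thesis using p1 unfolding ppart_def by auto
      qed simp
    next
      fix x assume "x \<in> P1"
      then show "x \<in> P \<inter> {s..u}" using p1 unfolding P_def ppart_def by auto
    qed
    have e2: "P \<inter> {u..t} = P2"
    proof (intro set_eqI iffI)
      fix x assume x: "x \<in> P \<inter> {u..t}"
      show "x \<in> P2"
      proof (cases "x \<in> P2")
        case False
        then have "x \<in> P1" using x P_def by auto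
        then have "x \<le> u" using p1 unfolding ppart_def by auto
        then have "x = u" using x by auto
        then show ?thesis using p2 unfolding ppart_def by auto
      qed simp
    next
      fix x assume "x \<in> P2"
      then show "x \<in> P \<inter> {u..t}" using p2 unfolding P_def ppart_def by auto
    qed
    have fP: "fmesh P t d" using fmesh_split[OF pp uP] p1 p2 unfolding e1 e2 by auto
    have "RS g b t P = RS g b u P1 + RS g b t P2" using RS_split[OF pp uP] unfolding e1 e2 .
    moreover have "\<bar>RS g b u P1 - I1\<bar> < e" using d1(2)[of P1] p1 fmesh_mono[OF p1(2), of d1] d_def by auto
    moreover have "\<bar>RS g b t P2 - I2\<bar> < e" using d2(2)[of P2] p2 fmesh_mono[OF p2(2), of d2] d_def by auto
    moreover have "\<bar>RS g b t P - I\<bar> < e" using d3(2)[of P] pp fmesh_mono[OF fP, of d3] d_def by auto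
    ultimately show "\<bar>I - (I1 + I2)\<bar> < 3 * e" by linarith
  qed
  then show ?thesis by simp
qed

lemma RS_diff: "RS (\<lambda>x. g1 x - g2 x) b t P = RS g1 b t P - RS g2 b t P"
  unfolding RS_def PS_def sum_subtractf[symmetric] by (simp add: left_diff_distrib)

lemma conv_diff:
  assumes c1: "conv g1 b s t I1" and c2: "conv g2 b s t I2"
  shows "conv (\<lambda>x. g1 x - g2 x) b s t (I1 - I2)"
  unfolding conv_def
proof (intro allI impI)
  fix e :: real assume e: "0 < e"
  obtain d1 where d1: "d1 > 0" "\<And>P. ppart s t P \<and> fmesh P t d1 \<Longrightarrow> \<bar>RS g1 b t P - I1\<bar> < e/2"
    using c1 e unfolding conv_def by (meson half_gt_zero)
  obtain d2 where d2: "d2 > 0" "\<And>P. ppart s t P \<and> fmesh P t d2 \<Longrightarrow> \<bar>RS g2 b t P - I2\<bar> < e/2"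
    using c2 e unfolding conv_def by (meson half_gt_zero)
  show "\<exists>\<delta>>0. \<forall>P. ppart s t P \<and> fmesh P t \<delta> \<longrightarrow> \<bar>RS (\<lambda>x. g1 x - g2 x) b t P - (I1 - I2)\<bar> < e"
  proof (intro exI[of _ "min d1 d2"] conjI allI impI)
    show "0 < min d1 d2" using d1 d2 by auto
    fix P assume P: "ppart s t P \<and> fmesh P t (min d1 d2)"
    have "\<bar>RS g1 b t P - I1\<bar> < e/2" using d1(2)[of P] P fmesh_mono[of P t "min d1 d2" d1] by auto
    moreover have "\<bar>RS g2 b t P - I2\<bar> < e/2" using d2(2)[of P] P fmesh_mono[of P t "min d1 d2" d2] by auto
    ultimately show "\<bar>RS (\<lambda>x. g1 x - g2 x) b t P - (I1 - I2)\<bar> < e" unfolding RS_diff by linarith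
  qed
qed

lemma RS_cong:
  assumes "ppart s t P" "\<And>x. x \<in> {s..t} \<Longrightarrow> g1 x = g2 x"
  shows "RS g1 b t P = RS g2 b t P"
  unfolding RS_def PS_def using assms unfolding ppart_def by (intro sum.cong) auto

lemma conv_cong:
  assumes "\<And>x. x \<in> {s..t} \<Longrightarrow> g1 x = g2 x"
  shows "conv g1 b s t I = conv g2 b s t I"
proof -
  have "RS g1 b t P = RS g2 b t P" if "ppart s t P" for P using RS_cong[OF that assms] .
  then show ?thesis unfolding conv_def by auto
qed

lemma yint_cong:
  assumes "\<And>x. x \<in> {s..t} \<Longrightarrow> g1 x = g2 x" "s \<le> t"
  shows "yint g1 b s t = yint g2 b s t"
  unfolding yint_def using RS_cong[OF grid_ppart[OF assms(2)] assms(1)] by simp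

lemma conv_YL:
  fixes g b :: "real \<Rightarrow> real"
  assumes c: "conv g b s t I" and hg: "hold lam Kg s t g" and hb: "hold gam Kb s t b" and K: "0 \<le> Kg" "0 \<le> Kb"
    and pos: "0 < lam" "0 < gam" "1 < lam + gam" and st: "s \<le> t"
  shows "\<bar>I - g s * (b t - b s)\<bar> \<le> CY (lam + gam) * Kg * Kb * (t - s) powr (lam + gam)"
proof (rule field_le_epsilon)
  fix e :: real assume e: "0 < e"
  obtain d where d: "d > 0" "\<And>P. ppart s t P \<and> fmesh P t d \<Longrightarrow> \<bar>RS g b t P - I\<bar> < e"
    using c e unfolding conv_def by blast
  obtain N where N: "\<forall>n\<ge>N. fmesh (grid s t n) t d" using grid_ev[OF st d(1)] by blast
  have "\<bar>RS g b t (grid s t N) - I\<bar> < e" using d(2) N grid_ppart[OF st] by auto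
  moreover have "\<bar>RS g b t (grid s t N) - g s * (b t - b s)\<bar> \<le> CY (lam + gam) * Kg * Kb * (t - s) powr (lam + gam)"
    using YL[OF hg hb K pos grid_ppart[OF st]] .
  ultimately show "\<bar>I - g s * (b t - b s)\<bar> \<le> CY (lam + gam) * Kg * Kb * (t - s) powr (lam + gam) + e" by linarith
qed

lemma sewing:
  fixes F g b :: "real \<Rightarrow> real"
  assumes th: "1 < \<theta>" and st: "s \<le> t"
    and germ: "\<And>u v. s \<le> u \<Longrightarrow> u \<le> v \<Longrightarrow> v \<le> t \<Longrightarrow> \<bar>F v - F u - g u * (b v - b u)\<bar> \<le> K * (v - u) powr \<theta>"
  shows "conv g b s t (F t - F s)"
  unfolding conv_def
proof (intro allI impI)
  fix e :: real assume e: "0 < e"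
  define K' where "K' = max K 0"
  have K': "0 \<le> K'" unfolding K'_def by auto
  have germ': "\<bar>F v - F u - g u * (b v - b u)\<bar> \<le> K' * (v - u) powr \<theta>" if "s \<le> u" "u \<le> v" "v \<le> t" for u v
    using germ[OF that] unfolding K'_def by (smt (verit) mult_right_mono powr_ge_zero)
  obtain d where d: "d > 0" "K' * (t - s) * d powr (\<theta> - 1) < e"
    using small_delta[of "K' * (t - s)" e \<theta>] K' st e th by auto
  show "\<exists>\<delta>>0. \<forall>P. ppart s t P \<and> fmesh P t \<delta> \<longrightarrow> \<bar>RS g b t P - (F t - F s)\<bar> < e"
  proof (intro exI[of _ d] conjI allI impI)
    show "0 < d" by fact
    fix P assume P: "ppart s t P \<and> fmesh P t d"
    have sub: "P \<subseteq> {s..t}" using P unfolding ppart_def by auto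
    have "PS (\<lambda>x y. F y - F x - g x * (b y - b x)) t P = PS (\<lambda>x y. F y - F x) t P - PS (\<lambda>x y. g x * (b y - b x)) t P"
      by (rule PS_diff)
    then have "F t - F s - RS g b t P = PS (\<lambda>x y. F y - F x - g x * (b y - b x)) t P"
      unfolding RS_def PS_telescope[OF conjunct1[OF P]] by simp
    also have "\<bar>\<dots>\<bar> \<le> PS (\<lambda>x y. K' * (y - x) powr \<theta>) t P"
    proof (rule PS_abs_le)
      fix x assume x: "x \<in> P - {t}"
      then have xt: "x < t" using sub by fastforce
      have "x < nx P x" "nx P x \<le> t" using ppart_nx[OF conjunct1[OF P] _ xt] x by auto
      then show "\<bar>F (nx P x) - F x - g x * (b (nx P x) - b x)\<bar> \<le> K' * (nx P x - x) powr \<theta>"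
        using germ'[of x "nx P x"] x sub by auto
    qed
    also have "\<dots> = K' * PS (\<lambda>x y. (y - x) powr \<theta>) t P" unfolding PS_def by (simp add: sum_distrib_left)
    also have "\<dots> \<le> K' * (d powr (\<theta> - 1) * (t - s))"
      using PS_pow_fine[OF conjunct1[OF P] conjunct2[OF P]] th K' by (intro mult_left_mono) auto
    finally show "\<bar>RS g b t P - (F t - F s)\<bar> < e" using d by (simp add: algebra_simps)
  qed
qed

lemma sorted_le_nth:
  fixes p :: "real list"
  assumes "sorted_wrt (<) p" "i \<le> j" "j < length p"
  shows "p ! i \<le> p ! j"
proof (cases "i = j")
  case False
  then have ij: "i < j" using assms by simp
  show ?thesis using sorted_wrt_nth_less[OF assms(1) ij assms(3)] by simp
qed simp

lemma sorted_nx: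
  fixes p :: "real list"
  assumes so: "sorted_wrt (<) p" and i: "Suc i < length p"
  shows "nx (set p) (p ! i) = p ! Suc i"
proof (rule nx_eqI)
  show "finite (set p)" by simp
  show "p ! Suc i \<in> set p" using i by simp
  show "p ! i < p ! Suc i" using so i by (simp add: sorted_wrt_nth_less)
  fix y assume y: "y \<in> set p" "p ! i < y"
  then obtain j where j: "j < length p" "y = p ! j" by (auto simp: in_set_conv_nth)
  have "i < j"
  proof (rule ccontr)
    assume "\<not> i < j"
    then have "j \<le> i" by simp
    then have "p ! j \<le> p ! i" using so i sorted_le_nth[OF so, of j i] by simp
    then show False using y j by simp
  qed
  then have "Suc i \<le> j" by simp
  then show "p ! Suc i \<le> y" using sorted_le_nth[OF so, of "Suc i" j] j by simp
qed

lemma sorted_set_minus_last: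
  fixes p :: "real list"
  assumes so: "sorted_wrt (<) p" and ne: "p \<noteq> []"
  shows "set p - {last p} = (\<lambda>i. p ! i) ` {..<length p - 1}"
proof -
  have d: "distinct p" using so by (simp only: strict_sorted_iff)
  have l: "last p = p ! (length p - 1)" using ne by (simp add: last_conv_nth)
  have L: "0 < length p" using ne by simp
  show ?thesis
  proof (intro set_eqI iffI)
    fix x assume x: "x \<in> set p - {last p}"
    then obtain j where j: "j < length p" "p ! j = x" by (auto simp: in_set_conv_nth)
    have "j \<noteq> length p - 1" using x j l by auto
    then have "j < length p - 1" using j by simp
    then show "x \<in> (\<lambda>i. p ! i) ` {..<length p - 1}" using j by auto
  next
    fix x assume "x \<in> (\<lambda>i. p ! i) ` {..<length p - 1}"
    then obtain j where j: "j < length p - 1" "x = p ! j" by auto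
    have "p ! j \<noteq> p ! (length p - 1)" using d j L by (simp add: nth_eq_iff_index_eq)
    moreover have "x \<in> set p" using j by simp
    ultimately show "x \<in> set p - {last p}" using j l by auto
  qed
qed

lemma list_RS:
  fixes p :: "real list"
  assumes so: "sorted_wrt (<) p" and ne: "p \<noteq> []"
  shows "riemann_sum g b p = RS g b (last p) (set p)"
    and "mesh_less p \<delta> \<longleftrightarrow> fmesh (set p) (last p) \<delta>"
proof -
  have d: "distinct p" using so by (simp only: strict_sorted_iff)
  have inj: "inj_on (\<lambda>i. p ! i) {..<length p - 1}" using d by (auto simp: inj_on_def nth_eq_iff_index_eq)
  have E: "set p - {last p} = (\<lambda>i. p ! i) ` {..<length p - 1}" by (rule sorted_set_minus_last[OF so ne])
  have "RS g b (last p) (set p) = (\<Sum>i<length p - 1. g (p ! i) * (b (nx (set p) (p ! i)) - b (p ! i)))"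
    unfolding RS_def PS_def E sum.reindex[OF inj] by simp
  also have "\<dots> = riemann_sum g b p" unfolding riemann_sum_def
    using sorted_nx[OF so] by (intro sum.cong) auto
  finally show "riemann_sum g b p = RS g b (last p) (set p)" by simp
  show "mesh_less p \<delta> \<longleftrightarrow> fmesh (set p) (last p) \<delta>"
    unfolding mesh_less_def fmesh_def E using sorted_nx[OF so] by auto
qed

lemma sorted_hd_last:
  fixes p :: "real list"
  assumes so: "sorted_wrt (<) p" and ne: "p \<noteq> []" and x: "x \<in> set p"
  shows "hd p \<le> x" "x \<le> last p"
proof -
  obtain j where j: "j < length p" "x = p ! j" using x by (auto simp: in_set_conv_nth)
  have "p ! 0 \<le> p ! j" using sorted_le_nth[OF so, of 0 j] j by simp
  then show "hd p \<le> x" using ne j by (simp add: hd_conv_nth)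
  have "p ! j \<le> p ! (length p - 1)" using sorted_le_nth[OF so, of j "length p - 1"] j by simp
  then show "x \<le> last p" using ne j by (simp add: last_conv_nth)
qed

lemma conv_iff_young:
  assumes st: "s \<le> t"
  shows "has_young_integral g b s t I \<longleftrightarrow> conv g b s t I"
proof
  assume H: "has_young_integral g b s t I"
  show "conv g b s t I" unfolding conv_def
  proof (intro allI impI)
    fix e :: real assume e: "0 < e"
    obtain d where d: "d > 0" "\<forall>p. is_partition s t p \<and> mesh_less p d \<longrightarrow> \<bar>riemann_sum g b p - I\<bar> < e"
      using H e unfolding has_young_integral_def by blast
    show "\<exists>\<delta>>0. \<forall>P. ppart s t P \<and> fmesh P t \<delta> \<longrightarrow> \<bar>RS g b t P - I\<bar> < e"
    proof (intro exI[of _ d] conjI allI impI)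
      show "0 < d" by fact
      fix P assume P: "ppart s t P \<and> fmesh P t d"
      define p where "p = sorted_list_of_set P"
      have fin: "finite P" using P unfolding ppart_def by auto
      have sp: "set p = P" unfolding p_def using fin by simp
      have so: "sorted_wrt (<) p" unfolding p_def by (rule strict_sorted_list_of_set)
      have ne: "p \<noteq> []" using sp P unfolding ppart_def by auto
      have hd: "hd p = s"
        using sorted_hd_last(1)[OF so ne, of s] sorted_hd_last(1)[OF so ne] hd_in_set[OF ne] sp P
        unfolding ppart_def by force
      have la: "last p = t"
        using sorted_hd_last(2)[OF so ne, of t] last_in_set[OF ne] sp P
        unfolding ppart_def by force
      have "is_partition s t p" unfolding is_partition_def using ne hd la so by auto
      moreover have "mesh_less p d" using list_RS(2)[OF so ne] P sp la by simp
      ultimately have "\<bar>riemann_sum g b p - I\<bar> < e" using d by auto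
      then show "\<bar>RS g b t P - I\<bar> < e" using list_RS(1)[OF so ne] sp la by simp
    qed
  qed
next
  assume C: "conv g b s t I"
  show "has_young_integral g b s t I" unfolding has_young_integral_def
  proof (intro allI impI)
    fix e :: real assume e: "0 < e"
    obtain d where d: "d > 0" "\<forall>P. ppart s t P \<and> fmesh P t d \<longrightarrow> \<bar>RS g b t P - I\<bar> < e"
      using C e unfolding conv_def by blast
    show "\<exists>\<delta>>0. \<forall>p. is_partition s t p \<and> mesh_less p \<delta> \<longrightarrow> \<bar>riemann_sum g b p - I\<bar> < e"
    proof (intro exI[of _ d] conjI allI impI)
      show "0 < d" by fact
      fix p assume p: "is_partition s t p \<and> mesh_less p d"
      have ne: "p \<noteq> []" and hd: "hd p = s" and la: "last p = t" and so: "sorted_wrt (<) p"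
        using p unfolding is_partition_def by auto
      have "ppart s t (set p)" unfolding ppart_def
        using sorted_hd_last[OF so ne] hd la hd_in_set[OF ne] last_in_set[OF ne] by auto
      moreover have "fmesh (set p) t d" using list_RS(2)[OF so ne] p la by simp
      ultimately show "\<bar>riemann_sum g b p - I\<bar> < e" using d list_RS(1)[OF so ne] la by simp
    qed
  qed
qed

lemma pw1:
  fixes d h l g :: real
  assumes "0 \<le> d" "d \<le> h" "0 < l" "l \<le> g"
  shows "d powr g \<le> d powr l * h powr (g - l)"
proof -
  have "d powr g = d powr l * d powr (g - l)" using powr_add[of d l "g - l"] by simp
  also have "\<dots> \<le> d powr l * h powr (g - l)" using assms by (intro mult_left_mono powr_mono2) auto
  finally show ?thesis .
qed

lemma pw2:
  fixes d h l g :: real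
  assumes "0 \<le> d" "d \<le> h" "0 < l" "0 < g"
  shows "d powr (l + g) \<le> d powr l * h powr g"
proof -
  have "d powr (l + g) = d powr l * d powr g" using powr_add[of d l g] by simp
  also have "\<dots> \<le> d powr l * h powr g" using assms by (intro mult_left_mono powr_mono2) auto
  finally show ?thesis .
qed

lemma hold_I:
  assumes "\<And>u v. a \<le> u \<Longrightarrow> u \<le> v \<Longrightarrow> v \<le> b \<Longrightarrow> \<bar>\<phi> v - \<phi> u\<bar> \<le> K * (v - u) powr \<mu>"
  shows "hold \<mu> K a b \<phi>"
  unfolding hold_def
proof (intro ballI)
  fix x y assume xy: "x \<in> {a..b}" "y \<in> {a..b}"
  show "\<bar>\<phi> x - \<phi> y\<bar> \<le> K * \<bar>x - y\<bar> powr \<mu>"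
  proof (cases "x \<le> y")
    case True
    then show ?thesis using assms[of x y] xy by (simp add: abs_minus_commute)
  next
    case False
    then show ?thesis using assms[of y x] xy by simp
  qed
qed

lemma hold_mono: "hold \<mu> K a b \<phi> \<Longrightarrow> K \<le> K' \<Longrightarrow> hold \<mu> K' a b \<phi>"
  unfolding hold_def
proof (intro ballI)
  fix x y assume h: "\<forall>x\<in>{a..b}. \<forall>y\<in>{a..b}. \<bar>\<phi> x - \<phi> y\<bar> \<le> K * \<bar>x - y\<bar> powr \<mu>" and K: "K \<le> K'"
    and xy: "x \<in> {a..b}" "y \<in> {a..b}"
  have "K * \<bar>x - y\<bar> powr \<mu> \<le> K' * \<bar>x - y\<bar> powr \<mu>" using K by (intro mult_right_mono) auto
  then show "\<bar>\<phi> x - \<phi> y\<bar> \<le> K' * \<bar>x - y\<bar> powr \<mu>" using h xy by fastforce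
qed

lemma hold_add:
  assumes h1: "hold \<mu> K1 a b \<phi>" and h2: "hold \<mu> K2 a b \<psi>"
  shows "hold \<mu> (K1 + K2) a b (\<lambda>x. \<phi> x + \<psi> x)"
  unfolding hold_def
proof (intro ballI)
  fix x y assume xy: "x \<in> {a..b}" "y \<in> {a..b}"
  have "\<bar>\<phi> x + \<psi> x - (\<phi> y + \<psi> y)\<bar> \<le> \<bar>\<phi> x - \<phi> y\<bar> + \<bar>\<psi> x - \<psi> y\<bar>" by linarith
  also have "\<dots> \<le> K1 * \<bar>x - y\<bar> powr \<mu> + K2 * \<bar>x - y\<bar> powr \<mu>"
    using holdD[OF h1 xy] holdD[OF h2 xy] by linarith
  finally show "\<bar>\<phi> x + \<psi> x - (\<phi> y + \<psi> y)\<bar> \<le> (K1 + K2) * \<bar>x - y\<bar> powr \<mu>" by (simp add: distrib_right)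
qed

lemma hold_diff:
  assumes h1: "hold \<mu> K1 a b \<phi>" and h2: "hold \<mu> K2 a b \<psi>"
  shows "hold \<mu> (K1 + K2) a b (\<lambda>x. \<phi> x - \<psi> x)"
  unfolding hold_def
proof (intro ballI)
  fix x y assume xy: "x \<in> {a..b}" "y \<in> {a..b}"
  have "\<bar>\<phi> x - \<psi> x - (\<phi> y - \<psi> y)\<bar> \<le> \<bar>\<phi> x - \<phi> y\<bar> + \<bar>\<psi> x - \<psi> y\<bar>" by linarith
  also have "\<dots> \<le> K1 * \<bar>x - y\<bar> powr \<mu> + K2 * \<bar>x - y\<bar> powr \<mu>"
    using holdD[OF h1 xy] holdD[OF h2 xy] by linarith
  finally show "\<bar>\<phi> x - \<psi> x - (\<phi> y - \<psi> y)\<bar> \<le> (K1 + K2) * \<bar>x - y\<bar> powr \<mu>" by (simp add: distrib_right)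
qed

lemma hold_const: "(\<And>x. x \<in> {a..b} \<Longrightarrow> \<phi> x = C) \<Longrightarrow> hold \<mu> 0 a b \<phi>"
  unfolding hold_def by auto

lemma hold_cong: "hold \<mu> K a b \<phi> \<Longrightarrow> (\<And>x. x \<in> {a..b} \<Longrightarrow> \<psi> x = \<phi> x) \<Longrightarrow> hold \<mu> K a b \<psi>"
  unfolding hold_def by auto

lemma hold_concat:
  assumes h1: "hold \<mu> K1 p q \<phi>" and h2: "hold \<mu> K2 q r \<phi>" and K: "0 \<le> K1" "0 \<le> K2"
    and mu: "0 \<le> \<mu>" and pqr: "p \<le> q" "q \<le> r"
  shows "hold \<mu> (K1 + K2) p r \<phi>"
proof (rule hold_I)
  fix u v assume uv: "p \<le> u" "u \<le> v" "v \<le> r"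
  have A: "K1 * (v - u) powr \<mu> \<le> (K1 + K2) * (v - u) powr \<mu>" using K by (simp add: mult_right_mono)
  have B: "K2 * (v - u) powr \<mu> \<le> (K1 + K2) * (v - u) powr \<mu>" using K by (simp add: mult_right_mono)
  show "\<bar>\<phi> v - \<phi> u\<bar> \<le> (K1 + K2) * (v - u) powr \<mu>"
  proof (cases "v \<le> q")
    case True
    then show ?thesis using holdD[OF h1, of v u] uv A by auto
  next
    case False
    show ?thesis
    proof (cases "q \<le> u")
      case True
      then show ?thesis using holdD[OF h2, of v u] uv B by auto
    next
      case False2: False
      have 1: "\<bar>\<phi> q - \<phi> u\<bar> \<le> K1 * (q - u) powr \<mu>" using holdD[OF h1, of q u] uv pqr False2 by auto
      have 2: "\<bar>\<phi> v - \<phi> q\<bar> \<le> K2 * (v - q) powr \<mu>" using holdD[OF h2, of v q] uv pqr False by auto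
      have "K1 * (q - u) powr \<mu> \<le> K1 * (v - u) powr \<mu>" using K mu False False2 uv
        by (intro mult_left_mono powr_mono2) auto
      moreover have "K2 * (v - q) powr \<mu> \<le> K2 * (v - u) powr \<mu>" using K mu False False2 uv
        by (intro mult_left_mono powr_mono2) auto
      ultimately show ?thesis using 1 2 by (simp add: algebra_simps)
    qed
  qed
qed

lemma hold_stop:
  assumes h: "hold \<mu> K p c \<phi>" and K: "0 \<le> K" and mu: "0 \<le> \<mu>" and pc: "p \<le> c"
  shows "hold \<mu> K p r (\<lambda>x. \<phi> (min x c))"
  unfolding hold_def
proof (intro ballI)
  fix x y assume xy: "x \<in> {p..r}" "y \<in> {p..r}"
  have "\<bar>\<phi> (min x c) - \<phi> (min y c)\<bar> \<le> K * \<bar>min x c - min y c\<bar> powr \<mu>"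
    using holdD[OF h, of "min x c" "min y c"] xy pc by auto
  also have "\<dots> \<le> K * \<bar>x - y\<bar> powr \<mu>"
    using K mu by (intro mult_left_mono powr_mono2) (auto simp: min_def)
  finally show "\<bar>\<phi> (min x c) - \<phi> (min y c)\<bar> \<le> K * \<bar>x - y\<bar> powr \<mu>" .
qed

lemma holder_on_hold: "holder_on \<mu> a b \<phi> \<longleftrightarrow> (\<exists>K. hold \<mu> K a b \<phi>)"
  unfolding holder_on_def hold_def ..

lemma semi_le:
  assumes ab: "a < b" and h: "hold \<mu> K a b \<phi>"
  shows "holder_semi \<mu> a b \<phi> \<le> K"
  unfolding holder_semi_def
proof (rule cSUP_least)
  have "(a, b) \<in> {(x, y). x \<in> {a..b} \<and> y \<in> {a..b} \<and> x \<noteq> y}" using ab by auto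
  then show "{(x, y). x \<in> {a..b} \<and> y \<in> {a..b} \<and> x \<noteq> y} \<noteq> {}" by blast
  fix p assume "p \<in> {(x, y). x \<in> {a..b} \<and> y \<in> {a..b} \<and> x \<noteq> y}"
  then obtain x y where p: "p = (x, y)" "x \<in> {a..b}" "y \<in> {a..b}" "x \<noteq> y" by auto
  have pos: "0 < \<bar>x - y\<bar> powr \<mu>" using p by simp
  show "\<bar>\<phi> (fst p) - \<phi> (snd p)\<bar> / \<bar>fst p - snd p\<bar> powr \<mu> \<le> K"
    using holdD[OF h p(2,3)] pos p(1) by (simp add: divide_le_eq)
qed

lemma semi_hold:
  assumes "holder_on \<mu> a b \<phi>"
  shows "hold \<mu> (holder_semi \<mu> a b \<phi>) a b \<phi>"
proof -
  obtain K where h: "hold \<mu> K a b \<phi>" using assms holder_on_hold by blast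
  let ?S = "{(x, y). x \<in> {a..b} \<and> y \<in> {a..b} \<and> x \<noteq> y}"
  let ?q = "\<lambda>p. \<bar>\<phi> (fst p) - \<phi> (snd p)\<bar> / \<bar>fst p - snd p\<bar> powr \<mu>"
  have bdd: "bdd_above (?q ` ?S)"
  proof (rule bdd_aboveI2)
    fix p assume "p \<in> ?S"
    then obtain x y where p: "p = (x, y)" "x \<in> {a..b}" "y \<in> {a..b}" "x \<noteq> y" by auto
    have pos: "0 < \<bar>x - y\<bar> powr \<mu>" using p by simp
    show "?q p \<le> K" using holdD[OF h p(2,3)] pos p(1) by (simp add: divide_le_eq)
  qed
  show ?thesis unfolding hold_def
  proof (intro ballI)
    fix x y assume xy: "x \<in> {a..b}" "y \<in> {a..b}"
    show "\<bar>\<phi> x - \<phi> y\<bar> \<le> holder_semi \<mu> a b \<phi> * \<bar>x - y\<bar> powr \<mu>"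
    proof (cases "x = y")
      case False
      have pos: "0 < \<bar>x - y\<bar> powr \<mu>" using False by simp
      have "?q (x, y) \<le> holder_semi \<mu> a b \<phi>" unfolding holder_semi_def
        using xy False by (intro cSUP_upper[OF _ bdd]) auto
      then show ?thesis using pos by (simp add: divide_le_eq)
    qed simp
  qed
qed

lemma semi_nonneg:
  assumes "a < b" "holder_on \<mu> a b \<phi>"
  shows "0 \<le> holder_semi \<mu> a b \<phi>"
proof -
  have "hold \<mu> (holder_semi \<mu> a b \<phi>) a b \<phi>" by (rule semi_hold[OF assms(2)])
  then have "\<bar>\<phi> b - \<phi> a\<bar> \<le> holder_semi \<mu> a b \<phi> * \<bar>b - a\<bar> powr \<mu>" using assms(1) by (intro holdD) auto
  then have "0 \<le> holder_semi \<mu> a b \<phi> * \<bar>b - a\<bar> powr \<mu>" by (rule order_trans[OF abs_ge_zero])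
  moreover have "0 < \<bar>b - a\<bar> powr \<mu>" using assms(1) by simp
  ultimately show ?thesis by (simp add: zero_le_mult_iff)
qed

lemma hold_nonneg_K:
  assumes "hold \<mu> K a b \<phi>"
  shows "hold \<mu> (max K 0) a b \<phi>"
  using hold_mono[OF assms] by simp

lemma zero_by_geom:
  fixes x C :: real
  assumes "\<And>n. \<bar>x\<bar> \<le> C / 2 ^ n"
  shows "x = 0"
proof (rule ccontr)
  assume "x \<noteq> 0"
  then have pos: "0 < \<bar>x\<bar>" by simp
  have "(\<lambda>n. C / 2 ^ n) \<longlonglongrightarrow> 0"
    using LIMSEQ_divide_realpow_zero[of 2 C] by simp
  from LIMSEQ_D[OF this pos] obtain n where "norm (C / 2 ^ n - 0) < \<bar>x\<bar>" by blast
  then have "\<bar>C / 2 ^ n\<bar> < \<bar>x\<bar>" by simp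
  moreover have "C / 2 ^ n \<le> \<bar>C / 2 ^ n\<bar>" by (rule abs_ge_self)
  ultimately show False using assms[of n] by linarith
qed

locale setting =
  fixes \<tau> T lam gam M1 Kb Kxi :: real and \<xi> b :: "real \<Rightarrow> real" and f :: "(real \<Rightarrow> real) \<Rightarrow> real"
  assumes tau: "0 < \<tau>" and T: "0 < T" and lam: "1/2 < lam" "lam < gam" "gam < 1"
    and hb: "hold gam Kb 0 T b" and Kb: "0 \<le> Kb"
    and hxi: "hold lam Kxi (-\<tau>) 0 \<xi>" and Kxi: "0 \<le> Kxi"
    and M1: "0 < M1"
    and A: "\<And>\<psi>1 \<psi>2. holder_on lam (-\<tau>) 0 \<psi>1 \<Longrightarrow> holder_on lam (-\<tau>) 0 \<psi>2 \<Longrightarrow>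
              \<bar>f \<psi>2 - f \<psi>1\<bar> \<le> M1 * sup_norm (-\<tau>) 0 (\<lambda>x. \<psi>2 x - \<psi>1 x)"
    and Bc: "\<And>N::nat. N \<ge> 1 \<Longrightarrow> (\<exists>c>0. \<forall>Z W.
                   Z \<in> holder_rho lam \<tau> \<xi> 0 T \<and> W \<in> holder_rho lam \<tau> \<xi> 0 T \<and>
                   max (holder_semi lam (0 - \<tau>) T Z) (holder_semi lam (0 - \<tau>) T W) \<le> real N \<longrightarrow>
                   holder_semi lam 0 T (\<lambda>s. f (seg \<tau> Z s) - f (seg \<tau> W s))
                     \<le> c * holder_semi lam (0 - \<tau>) T (\<lambda>x. Z x - W x))"
begin

definition g :: "(real \<Rightarrow> real) \<Rightarrow> real \<Rightarrow> real" where
  "g X = (\<lambda>s. f (seg \<tau> X s))"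

definition F0 :: real where "F0 = \<bar>f (seg \<tau> \<xi> 0)\<bar>"

abbreviation "CC \<equiv> CY (lam + gam)"

lemma basic: "0 < lam" "0 < gam" "1 < lam + gam" "lam \<le> gam" "0 \<le> lam"
  using lam by auto

lemma CC_nonneg: "0 \<le> CC" using CY_nonneg basic by auto

lemma F0_nonneg: "0 \<le> F0" unfolding F0_def by simp

lemma seg_hold:
  assumes "hold lam K (s - \<tau>) s X"
  shows "holder_on lam (-\<tau>) 0 (seg \<tau> X s)"
  unfolding holder_on_hold
proof (intro exI[of _ K])
  show "hold lam K (- \<tau>) 0 (seg \<tau> X s)" unfolding hold_def
  proof (intro ballI)
    fix x y assume xy: "x \<in> {-\<tau>..0}" "y \<in> {-\<tau>..0}"
    have "\<bar>X (s + x) - X (s + y)\<bar> \<le> K * \<bar>(s + x) - (s + y)\<bar> powr lam"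
      using xy by (intro holdD[OF assms]) auto
    then show "\<bar>seg \<tau> X s x - seg \<tau> X s y\<bar> \<le> K * \<bar>x - y\<bar> powr lam"
      using xy unfolding seg_def by simp
  qed
qed

lemma g_hold:
  assumes h: "hold lam K (a - \<tau>) c X" and K: "0 \<le> K" and ac: "a \<le> c"
  shows "hold lam (M1 * K) a c (g X)"
  unfolding hold_def
proof (intro ballI)
  fix x y assume xy: "x \<in> {a..c}" "y \<in> {a..c}"
  have "hold lam K (x - \<tau>) x X" using xy by (intro hold_sub[OF h]) auto
  then have hx: "holder_on lam (-\<tau>) 0 (seg \<tau> X x)" by (rule seg_hold)
  have "hold lam K (y - \<tau>) y X" using xy by (intro hold_sub[OF h]) auto
  then have hy: "holder_on lam (-\<tau>) 0 (seg \<tau> X y)" by (rule seg_hold)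
  have "\<bar>f (seg \<tau> X x) - f (seg \<tau> X y)\<bar> \<le> M1 * sup_norm (-\<tau>) 0 (\<lambda>z. seg \<tau> X x z - seg \<tau> X y z)"
    by (rule A[OF hy hx])
  also have "sup_norm (-\<tau>) 0 (\<lambda>z. seg \<tau> X x z - seg \<tau> X y z) \<le> K * \<bar>x - y\<bar> powr lam"
    unfolding sup_norm_def
  proof (rule cSUP_least)
    show "{-\<tau>..0} \<noteq> {}" using tau by auto
    fix z assume z: "z \<in> {-\<tau>..0}"
    have "\<bar>X (x + z) - X (y + z)\<bar> \<le> K * \<bar>(x + z) - (y + z)\<bar> powr lam"
      using xy z by (intro holdD[OF h]) auto
    then show "\<bar>seg \<tau> X x z - seg \<tau> X y z\<bar> \<le> K * \<bar>x - y\<bar> powr lam" using z unfolding seg_def by simp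
  qed
  then have "M1 * sup_norm (-\<tau>) 0 (\<lambda>z. seg \<tau> X x z - seg \<tau> X y z) \<le> M1 * (K * \<bar>x - y\<bar> powr lam)"
    using M1 by (intro mult_left_mono) auto
  finally show "\<bar>g X x - g X y\<bar> \<le> M1 * K * \<bar>x - y\<bar> powr lam" unfolding g_def by simp
qed

lemma g_eq:
  assumes "\<And>x. x \<in> {s - \<tau>..s} \<Longrightarrow> X x = Y x"
  shows "g X s = g Y s"
proof -
  have "seg \<tau> X s = seg \<tau> Y s" unfolding seg_def using assms by (intro ext) auto
  then show ?thesis unfolding g_def by simp
qed

lemma g_xi:
  assumes "\<And>x. x \<in> {-\<tau>..0} \<Longrightarrow> X x = \<xi> x"
  shows "g X 0 = f (seg \<tau> \<xi> 0)"
  using g_eq[of 0 X \<xi>] assms unfolding g_def by simp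

lemma g_bound:
  assumes xi: "\<And>x. x \<in> {-\<tau>..0} \<Longrightarrow> X x = \<xi> x" and h: "hold lam K (-\<tau>) u X" and K: "0 \<le> K"
    and u: "0 \<le> u" "u \<le> T"
  shows "\<bar>g X u\<bar> \<le> F0 + M1 * K * T powr lam"
proof -
  have hg: "hold lam (M1 * K) 0 u (g X)" using g_hold[of K 0 u X] h K u by simp
  have "\<bar>g X u - g X 0\<bar> \<le> M1 * K * \<bar>u - 0\<bar> powr lam" using u by (intro holdD[OF hg]) auto
  also have "\<dots> \<le> M1 * K * T powr lam" using u K M1 basic by (intro mult_left_mono powr_mono2) auto
  finally show ?thesis using g_xi[OF xi] unfolding F0_def by linarith
qed

definition gsol :: "real \<Rightarrow> (real \<Rightarrow> real) \<Rightarrow> bool" where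
  "gsol a X \<longleftrightarrow> (\<exists>K. hold lam K (-\<tau>) a X) \<and> (\<forall>x\<in>{-\<tau>..0}. X x = \<xi> x) \<and>
     (\<exists>K. \<forall>u v. 0 \<le> u \<longrightarrow> u \<le> v \<longrightarrow> v \<le> a \<longrightarrow> \<bar>X v - X u - g X u * (b v - b u)\<bar> \<le> K * (v - u) powr (lam + gam))"

lemma gsol_int:
  assumes "gsol a X" "0 \<le> u" "u \<le> v" "v \<le> a"
  shows "yint (g X) b u v = X v - X u"
proof -
  obtain K where K: "\<forall>u v. 0 \<le> u \<longrightarrow> u \<le> v \<longrightarrow> v \<le> a \<longrightarrow> \<bar>X v - X u - g X u * (b v - b u)\<bar> \<le> K * (v - u) powr (lam + gam)"
    using assms(1) unfolding gsol_def by blast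
  have "conv (g X) b u v (X v - X u)"
    using assms K by (intro sewing[OF basic(3) assms(3), of X "g X" b K]) auto
  then show ?thesis using conv_yint assms by blast
qed

lemma hb_sub: "0 \<le> u \<Longrightarrow> v \<le> T \<Longrightarrow> hold gam Kb u v b"
  using hold_sub[OF hb] by auto

lemma conv_gX:
  assumes h: "hold lam K (-\<tau>) c X" and K: "0 \<le> K" and uv: "0 \<le> u" "u \<le> v" "v \<le> c" "c \<le> T"
  shows "conv (g X) b u v (yint (g X) b u v)" "hold lam (M1 * K) u v (g X)"
proof -
  show hg: "hold lam (M1 * K) u v (g X)" using uv by (intro g_hold hold_sub[OF h] K) auto
  show "conv (g X) b u v (yint (g X) b u v)"
    using conv_exists[OF hg hb_sub[of u v] _ Kb basic(1,2,3) uv(2)] uv K M1 by auto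
qed

lemma yint_YL_X:
  assumes h: "hold lam K (-\<tau>) c X" and K: "0 \<le> K" and uv: "0 \<le> u" "u \<le> v" "v \<le> c" "c \<le> T"
  shows "\<bar>yint (g X) b u v - g X u * (b v - b u)\<bar> \<le> CC * (M1 * K) * Kb * (v - u) powr (lam + gam)"
  using conv_YL[OF conv_gX(1)[OF assms] conv_gX(2)[OF assms] hb_sub[of u v] _ Kb basic(1,2,3) uv(2)] uv K M1 by auto

lemma yint_add_X:
  assumes h: "hold lam K (-\<tau>) c X" and K: "0 \<le> K" and uv: "0 \<le> s" "s \<le> u" "u \<le> v" "v \<le> c" "c \<le> T"
  shows "yint (g X) b s v = yint (g X) b s u + yint (g X) b u v"
  using conv_add[OF conv_gX(1)[OF h K, of s u] conv_gX(1)[OF h K, of u v] conv_gX(1)[OF h K, of s v]] uv by auto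

lemma gsol_YL:
  assumes gs: "gsol a X" and h: "hold lam K (-\<tau>) c X" and K: "0 \<le> K" and ca: "c \<le> a" "c \<le> T"
    and uv: "0 \<le> u" "u \<le> v" "v \<le> c"
  shows "\<bar>X v - X u - g X u * (b v - b u)\<bar> \<le> CC * (M1 * K) * Kb * (v - u) powr (lam + gam)"
  using yint_YL_X[OF h K uv ca(2)] gsol_int[OF gs uv(1,2)] uv ca by auto

end

lemma small_pow:
  fixes C \<epsilon> e :: real
  assumes "0 \<le> C" "0 < \<epsilon>" "0 < e"
  shows "\<exists>h>0. \<forall>h'. 0 < h' \<longrightarrow> h' \<le> h \<longrightarrow> C * h' powr e < \<epsilon>"
proof -
  obtain d where d: "d > 0" "C * d powr (e + 1 - 1) < \<epsilon>" using small_delta[of C \<epsilon> "e + 1"] assms by auto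
  have "C * h' powr e < \<epsilon>" if "0 < h'" "h' \<le> d" for h'
  proof -
    have "C * h' powr e \<le> C * d powr e" using that assms by (intro mult_left_mono powr_mono2) auto
    then show ?thesis using d by simp
  qed
  then show ?thesis using d by blast
qed

context setting
begin

lemma apriori: "\<exists>Nst\<ge>0. \<forall>a X. 0 \<le> a \<longrightarrow> a \<le> T \<longrightarrow> gsol a X \<longrightarrow> hold lam Nst (-\<tau>) a X"
proof -
  obtain h1 where h1: "h1 > 0" "\<And>h'. 0 < h' \<Longrightarrow> h' \<le> h1 \<Longrightarrow> (Kb * M1 * T powr lam) * h' powr (gam - lam) < 1/4"
    using small_pow[of "Kb * M1 * T powr lam" "1/4" "gam - lam"] Kb M1 lam by auto
  obtain h2 where h2: "h2 > 0" "\<And>h'. 0 < h' \<Longrightarrow> h' \<le> h2 \<Longrightarrow> (CC * M1 * Kb) * h' powr gam < 1/4"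
    using small_pow[of "CC * M1 * Kb" "1/4" gam] Kb M1 basic CC_nonneg by auto
  define h0 where "h0 = min h1 h2"
  have h0: "0 < h0" "h0 \<le> h1" "h0 \<le> h2" unfolding h0_def using h1 h2 by auto
  define q1 where "q1 = h0 powr (gam - lam)"
  define q2 where "q2 = h0 powr gam"
  have c1: "M1 * T powr lam * Kb * q1 \<le> 1/4" using h1(2)[OF h0(1,2)] unfolding q1_def by (simp add: algebra_simps)
  have c2: "CC * M1 * Kb * q2 \<le> 1/4" using h2(2)[OF h0(1,3)] unfolding q2_def by (simp add: algebra_simps)
  have q: "0 \<le> q1" "0 \<le> q2" unfolding q1_def q2_def by auto
  define A0 where "A0 = Kb * q1 * F0"
  have A0: "0 \<le> A0" unfolding A0_def using Kb q F0_nonneg by auto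
  define \<Phi> where "\<Phi> k = 2 ^ k * (Kxi + 2 * A0) - 2 * A0" for k :: nat
  have \<Phi>0: "\<Phi> 0 = Kxi" unfolding \<Phi>_def by simp
  have \<Phi>S: "\<Phi> (Suc k) = 2 * \<Phi> k + 2 * A0" for k unfolding \<Phi>_def by (simp add: algebra_simps)
  have \<Phi>nn: "0 \<le> \<Phi> k" for k by (induction k) (use \<Phi>0 \<Phi>S Kxi A0 in auto)
  have claim: "\<forall>a X. 0 \<le> a \<longrightarrow> a \<le> T \<longrightarrow> gsol a X \<longrightarrow> hold lam (\<Phi> k) (-\<tau>) (min a (real k * h0)) X" for k
  proof (induction k)
    case 0
    show ?case
    proof (intro allI impI)
      fix a X assume a: "0 \<le> a" "a \<le> T" and gs: "gsol a X"
      have "hold lam Kxi (-\<tau>) 0 X" using hxi gs unfolding gsol_def by (intro hold_cong[OF hxi]) auto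
      then show "hold lam (\<Phi> 0) (-\<tau>) (min a (real 0 * h0)) X" using a \<Phi>0 by simp
    qed
  next
    case (Suc k)
    show ?case
    proof (intro allI impI)
      fix a X assume a: "0 \<le> a" "a \<le> T" and gs: "gsol a X"
      define m where "m = min a (real k * h0)"
      define m' where "m' = min a (real (Suc k) * h0)"
      have IH: "hold lam (\<Phi> k) (-\<tau>) m X" using Suc a gs unfolding m_def by blast
      have mm: "m \<le> m'" "0 \<le> m" "m' \<le> a" unfolding m_def m'_def using h0 a by (auto simp: min_def distrib_right)
      show "hold lam (\<Phi> (Suc k)) (-\<tau>) (min a (real (Suc k) * h0)) X"
      proof (cases "m = m'")
        case True
        then show ?thesis using hold_mono[OF IH, of "\<Phi> (Suc k)"] \<Phi>S \<Phi>nn A0 unfolding m'_def by auto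
      next
        case False
        then have mlt: "m < m'" using mm by simp
        have mk: "m = real k * h0" using mlt unfolding m_def m'_def by (auto simp: min_def split: if_splits)
        have mh: "m' - m \<le> h0" unfolding m'_def mk by (auto simp: min_def algebra_simps)
        obtain K0 where K0: "hold lam K0 (-\<tau>) a X" using gs unfolding gsol_def by blast
        have ho: "holder_on lam m m' X" unfolding holder_on_hold using mm tau by (intro exI[of _ K0] hold_sub[OF K0]) auto
        define L where "L = holder_semi lam m m' X"
        have hL: "hold lam L m m' X" unfolding L_def by (rule semi_hold[OF ho])
        have L0: "0 \<le> L" unfolding L_def by (rule semi_nonneg[OF mlt ho])
        define S where "S = \<Phi> k + L"
        have S0: "0 \<le> S" unfolding S_def using \<Phi>nn L0 by (simp add: add_nonneg_nonneg)
        have hS: "hold lam S (-\<tau>) m' X" unfolding S_def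
          using hold_concat[OF IH hL \<Phi>nn L0 basic(5)] mm tau by auto
        have xi: "\<And>x. x \<in> {-\<tau>..0} \<Longrightarrow> X x = \<xi> x" using gs unfolding gsol_def by auto
        have step: "\<bar>X v - X u\<bar> \<le> (A0 + S / 2) * (v - u) powr lam" if uv: "m \<le> u" "u \<le> v" "v \<le> m'" for u v
        proof -
          define P where "P = (v - u) powr lam"
          have P0: "0 \<le> P" unfolding P_def by simp
          have dh: "v - u \<le> h0" using uv mh by auto
          have e1: "\<bar>X v - X u - g X u * (b v - b u)\<bar> \<le> CC * (M1 * S) * Kb * (v - u) powr (lam + gam)"
            using gsol_YL[OF gs hS S0] mm a uv by auto
          have gu: "\<bar>g X u\<bar> \<le> F0 + M1 * S * T powr lam"
            using g_bound[OF xi hold_sub[OF hS, of "-\<tau>" u] S0] uv mm a by auto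
          have bu: "\<bar>b v - b u\<bar> \<le> Kb * (v - u) powr gam"
            using holdD[OF hb, of v u] uv mm a by auto
          have p1: "(v - u) powr gam \<le> P * q1" unfolding P_def q1_def using pw1[of "v - u" h0 lam gam] uv dh basic by auto
          have p2: "(v - u) powr (lam + gam) \<le> P * q2" unfolding P_def q2_def using pw2[of "v - u" h0 lam gam] uv dh basic by auto
          have "\<bar>g X u * (b v - b u)\<bar> \<le> (F0 + M1 * S * T powr lam) * (Kb * (v - u) powr gam)"
            unfolding abs_mult using gu bu by (intro mult_mono) auto
          also have "\<dots> \<le> (F0 + M1 * S * T powr lam) * (Kb * (P * q1))"
            using p1 Kb F0_nonneg M1 S0 by (intro mult_left_mono) (auto intro!: add_nonneg_nonneg mult_nonneg_nonneg)
          also have "\<dots> = P * A0 + P * S * (M1 * T powr lam * Kb * q1)" unfolding A0_def by (simp add: algebra_simps)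
          also have "\<dots> \<le> P * A0 + P * S * (1/4)" using c1 P0 S0 by (intro add_left_mono mult_left_mono) auto
          finally have t1: "\<bar>g X u * (b v - b u)\<bar> \<le> P * A0 + P * S * (1/4)" .
          have "CC * (M1 * S) * Kb * (v - u) powr (lam + gam) \<le> CC * (M1 * S) * Kb * (P * q2)"
            using p2 CC_nonneg M1 S0 Kb by (intro mult_left_mono) auto
          also have "\<dots> = P * S * (CC * M1 * Kb * q2)" by (simp add: algebra_simps)
          also have "\<dots> \<le> P * S * (1/4)" using c2 P0 S0 by (intro mult_left_mono) auto
          finally have t2: "CC * (M1 * S) * Kb * (v - u) powr (lam + gam) \<le> P * S * (1/4)" .
          have "\<bar>X v - X u\<bar> \<le> \<bar>g X u * (b v - b u)\<bar> + CC * (M1 * S) * Kb * (v - u) powr (lam + gam)"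
            using e1 by linarith
          also have "\<dots> \<le> (A0 + S / 2) * P" using t1 t2 by (simp add: algebra_simps)
          finally show ?thesis unfolding P_def .
        qed
        have "hold lam (A0 + S / 2) m m' X" by (rule hold_I) (use step in auto)
        then have "L \<le> A0 + S / 2" unfolding L_def by (rule semi_le[OF mlt])
        then have "L \<le> 2 * A0 + \<Phi> k" using S_def by linarith
        then have "S \<le> \<Phi> (Suc k)" unfolding S_def \<Phi>S by simp
        then show ?thesis using hold_mono[OF hS] unfolding m'_def by auto
      qed
    qed
  qed
  define K0 where "K0 = nat \<lceil>T / h0\<rceil>"
  have "T / h0 \<le> real K0" unfolding K0_def by linarith
  then have TK: "T \<le> real K0 * h0" using h0 by (simp add: divide_le_eq)
  show ?thesis
  proof (intro exI[of _ "\<Phi> K0"] conjI allI impI)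
    show "0 \<le> \<Phi> K0" by (rule \<Phi>nn)
    fix a X assume "0 \<le> a" "a \<le> T" "gsol a X"
    then show "hold lam (\<Phi> K0) (-\<tau>) a X" using claim[of K0] TK by (auto simp: min_def)
  qed
qed

end

lemma hold_uminus:
  assumes h: "hold \<mu> K a b (\<lambda>x. \<phi> x - \<psi> x)"
  shows "hold \<mu> K a b (\<lambda>x. \<psi> x - \<phi> x)"
  unfolding hold_def
proof (intro ballI)
  fix x y assume xy: "x \<in> {a..b}" "y \<in> {a..b}"
  have eq: "\<psi> x - \<phi> x - (\<psi> y - \<phi> y) = - (\<phi> x - \<psi> x - (\<phi> y - \<psi> y))" by simp
  show "\<bar>\<psi> x - \<phi> x - (\<psi> y - \<phi> y)\<bar> \<le> K * \<bar>x - y\<bar> powr \<mu>"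
    unfolding eq abs_minus_cancel using holdD[OF h xy] by simp
qed

lemma hold_zero_limit:
  assumes h: "hold \<mu> K p q D" and pq: "p < q" and mu: "0 < \<mu>" and z: "\<And>x. p \<le> x \<Longrightarrow> x < q \<Longrightarrow> D x = 0"
  shows "D q = 0"
proof (rule ccontr)
  assume ne: "D q \<noteq> 0"
  define K' where "K' = max K 0"
  have h': "hold \<mu> K' p q D" unfolding K'_def by (rule hold_nonneg_K[OF h])
  obtain d where d: "d > 0" "\<And>h'. 0 < h' \<Longrightarrow> h' \<le> d \<Longrightarrow> K' * h' powr \<mu> < \<bar>D q\<bar>"
    using small_pow[of K' "\<bar>D q\<bar>" \<mu>] ne mu unfolding K'_def by auto
  define e where "e = min d (q - p)"
  have e: "0 < e" "e \<le> d" "e \<le> q - p" unfolding e_def using d pq by auto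
  have "D (q - e) = 0" using z e by auto
  then have "\<bar>D q\<bar> \<le> K' * \<bar>q - (q - e)\<bar> powr \<mu>" using holdD[OF h', of q "q - e"] e pq by auto
  then show False using d(2)[OF e(1,2)] e by simp
qed

context setting
begin

lemma Bw:
  assumes c: "c > 0"
    and cprop: "\<forall>Z W. Z \<in> holder_rho lam \<tau> \<xi> 0 T \<and> W \<in> holder_rho lam \<tau> \<xi> 0 T \<and>
                   max (holder_semi lam (0 - \<tau>) T Z) (holder_semi lam (0 - \<tau>) T W) \<le> real N \<longrightarrow>
                   holder_semi lam 0 T (\<lambda>s. f (seg \<tau> Z s) - f (seg \<tau> W s))
                     \<le> c * holder_semi lam (0 - \<tau>) T (\<lambda>x. Z x - W x)"
    and hZ: "hold lam (real N) (-\<tau>) T Z" "\<forall>x\<in>{-\<tau>..0}. Z x = \<xi> x"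
    and hW: "hold lam (real N) (-\<tau>) T W" "\<forall>x\<in>{-\<tau>..0}. W x = \<xi> x"
    and hD: "hold lam K (-\<tau>) T (\<lambda>x. Z x - W x)" and K: "0 \<le> K"
  shows "hold lam (c * K) 0 T (\<lambda>s. g Z s - g W s)"
proof -
  have lt: "-\<tau> < T" using tau T by simp
  have "Z \<in> holder_rho lam \<tau> \<xi> 0 T" unfolding holder_rho_def holder_on_hold using hZ by auto
  moreover have "W \<in> holder_rho lam \<tau> \<xi> 0 T" unfolding holder_rho_def holder_on_hold using hW by auto
  moreover have "holder_semi lam (0 - \<tau>) T Z \<le> real N" using semi_le[OF lt hZ(1)] by simp
  moreover have "holder_semi lam (0 - \<tau>) T W \<le> real N" using semi_le[OF lt hW(1)] by simp
  ultimately have 1: "holder_semi lam 0 T (\<lambda>s. f (seg \<tau> Z s) - f (seg \<tau> W s)) \<le> c * holder_semi lam (0 - \<tau>) T (\<lambda>x. Z x - W x)"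
    using cprop by auto
  have 2: "holder_semi lam (0 - \<tau>) T (\<lambda>x. Z x - W x) \<le> K" using semi_le[OF lt hD] by simp
  have gZ: "hold lam (M1 * real N) 0 T (g Z)" using g_hold[of "real N" 0 T Z] hZ T by simp
  have gW: "hold lam (M1 * real N) 0 T (g W)" using g_hold[of "real N" 0 T W] hW T by simp
  have "holder_on lam 0 T (\<lambda>s. g Z s - g W s)" unfolding holder_on_hold using hold_diff[OF gZ gW] by blast
  then have 3: "hold lam (holder_semi lam 0 T (\<lambda>s. g Z s - g W s)) 0 T (\<lambda>s. g Z s - g W s)" by (rule semi_hold)
  have "holder_semi lam 0 T (\<lambda>s. g Z s - g W s) \<le> c * K"
    using 1 2 c unfolding g_def by (smt (verit, best) mult_left_mono)
  then show ?thesis using hold_mono[OF 3] by blast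
qed

lemma contr:
  assumes c: "c > 0"
    and cprop: "\<forall>Z W. Z \<in> holder_rho lam \<tau> \<xi> 0 T \<and> W \<in> holder_rho lam \<tau> \<xi> 0 T \<and>
                   max (holder_semi lam (0 - \<tau>) T Z) (holder_semi lam (0 - \<tau>) T W) \<le> real N \<longrightarrow>
                   holder_semi lam 0 T (\<lambda>s. f (seg \<tau> Z s) - f (seg \<tau> W s))
                     \<le> c * holder_semi lam (0 - \<tau>) T (\<lambda>x. Z x - W x)"
    and hZ: "hold lam (real N) (-\<tau>) T Z" "\<forall>x\<in>{-\<tau>..0}. Z x = \<xi> x"
    and hW: "hold lam (real N) (-\<tau>) T W" "\<forall>x\<in>{-\<tau>..0}. W x = \<xi> x"
    and hD: "hold lam K (-\<tau>) T (\<lambda>x. Z x - W x)" and K: "0 \<le> K"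
    and ZW: "\<And>x. x \<in> {-\<tau>..a} \<Longrightarrow> Z x = W x"
    and pts: "0 \<le> a" "a \<le> u" "u \<le> v" "v \<le> a'" "a' \<le> T"
  shows "\<bar>yint (g Z) b u v - yint (g W) b u v\<bar> \<le> c * K * Kb * (1 + CC) * (a' - a) powr gam * (v - u) powr lam"
proof -
  let ?G = "\<lambda>s. g Z s - g W s"
  define h where "h = a' - a"
  have hG: "hold lam (c * K) 0 T ?G" by (rule Bw[OF c cprop hZ hW hD K])
  have N0: "0 \<le> real N" by simp
  have cZ: "conv (g Z) b u v (yint (g Z) b u v)" using conv_gX(1)[OF hZ(1) N0, of u v] pts by auto
  have cW: "conv (g W) b u v (yint (g W) b u v)" using conv_gX(1)[OF hW(1) N0, of u v] pts by auto
  have cG: "conv ?G b u v (yint (g Z) b u v - yint (g W) b u v)" by (rule conv_diff[OF cZ cW])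
  have cK: "0 \<le> c * K" using c K by simp
  have YLG: "\<bar>(yint (g Z) b u v - yint (g W) b u v) - ?G u * (b v - b u)\<bar> \<le> CC * (c * K) * Kb * (v - u) powr (lam + gam)"
    using conv_YL[OF cG hold_sub[OF hG, of u v] hb_sub[of u v] cK Kb basic(1,2,3) pts(3)] pts by auto
  have Ga: "?G a = 0" using g_eq[of a Z W] ZW pts by auto
  have Gu: "\<bar>?G u\<bar> \<le> c * K * h powr lam"
  proof -
    have "\<bar>?G u - ?G a\<bar> \<le> c * K * \<bar>u - a\<bar> powr lam" using holdD[OF hG, of u a] pts by auto
    also have "\<dots> \<le> c * K * h powr lam" unfolding h_def using pts cK basic by (intro mult_left_mono powr_mono2) auto
    finally show ?thesis using Ga by simp
  qed
  have dh: "v - u \<le> h" unfolding h_def using pts by auto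
  have bu: "\<bar>b v - b u\<bar> \<le> Kb * ((v - u) powr lam * h powr (gam - lam))"
  proof -
    have "\<bar>b v - b u\<bar> \<le> Kb * \<bar>v - u\<bar> powr gam" using holdD[OF hb, of v u] pts by auto
    also have "\<dots> \<le> Kb * ((v - u) powr lam * h powr (gam - lam))"
      using pw1[of "v - u" h lam gam] pts dh basic Kb by (intro mult_left_mono) auto
    finally show ?thesis .
  qed
  have hpow: "h powr lam * h powr (gam - lam) = h powr gam" using powr_add[of h lam "gam - lam"] by simp
  have t1: "\<bar>?G u * (b v - b u)\<bar> \<le> c * K * Kb * h powr gam * (v - u) powr lam"
  proof -
    have "\<bar>?G u * (b v - b u)\<bar> \<le> (c * K * h powr lam) * (Kb * ((v - u) powr lam * h powr (gam - lam)))"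
      unfolding abs_mult using Gu bu by (intro mult_mono) auto
    also have "\<dots> = c * K * Kb * (h powr lam * h powr (gam - lam)) * (v - u) powr lam" by (simp add: algebra_simps)
    finally show ?thesis unfolding hpow .
  qed
  have t2: "CC * (c * K) * Kb * (v - u) powr (lam + gam) \<le> CC * c * K * Kb * h powr gam * (v - u) powr lam"
  proof -
    have "CC * (c * K) * Kb * (v - u) powr (lam + gam) \<le> CC * (c * K) * Kb * ((v - u) powr lam * h powr gam)"
      using pw2[of "v - u" h lam gam] pts dh basic Kb CC_nonneg cK by (intro mult_left_mono) auto
    then show ?thesis by (simp add: algebra_simps)
  qed
  have "\<bar>yint (g Z) b u v - yint (g W) b u v\<bar> \<le> \<bar>?G u * (b v - b u)\<bar> + CC * (c * K) * Kb * (v - u) powr (lam + gam)"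
    using YLG by linarith
  also have "\<dots> \<le> c * K * Kb * (1 + CC) * h powr gam * (v - u) powr lam" using t1 t2 by (simp add: algebra_simps)
  finally show ?thesis unfolding h_def .
qed

end

context setting
begin

lemma local_ex:
  assumes Nst: "0 \<le> Nst" "Nst + 1 \<le> real N"
    and APR: "\<forall>a X. 0 \<le> a \<longrightarrow> a \<le> T \<longrightarrow> gsol a X \<longrightarrow> hold lam Nst (-\<tau>) a X"
    and c: "c > 0"
    and cprop: "\<forall>Z W. Z \<in> holder_rho lam \<tau> \<xi> 0 T \<and> W \<in> holder_rho lam \<tau> \<xi> 0 T \<and>
                   max (holder_semi lam (0 - \<tau>) T Z) (holder_semi lam (0 - \<tau>) T W) \<le> real N \<longrightarrow>
                   holder_semi lam 0 T (\<lambda>s. f (seg \<tau> Z s) - f (seg \<tau> W s))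
                     \<le> c * holder_semi lam (0 - \<tau>) T (\<lambda>x. Z x - W x)"
    and h: "0 < h"
    and H1: "Kb * h powr (gam - lam) * (F0 + M1 * real N * T powr lam) + CC * M1 * real N * Kb * h powr gam \<le> 1"
    and H2: "c * Kb * (1 + CC) * h powr gam \<le> 1/2"
    and a: "0 \<le> a" "a < T" and gs: "gsol a Xp"
  shows "\<exists>Y. gsol (min (a + h) T) Y"
proof -
  define a' where "a' = min (a + h) T"
  have a': "a < a'" "a' \<le> T" "a' - a \<le> h" using a h unfolding a'_def by auto
  have aT: "a \<le> T" using a by simp
  have hXp: "hold lam Nst (-\<tau>) a Xp" using APR a(1) aT gs by blast
  have xiXp: "\<And>x. x \<in> {-\<tau>..0} \<Longrightarrow> Xp x = \<xi> x" using gs unfolding gsol_def by auto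
  define \<Gamma> where "\<Gamma> Z = (\<lambda>t. if t \<le> a then Xp t else Xp a + yint (g Z) b a (min t a'))" for Z
  define Bl where "Bl Z \<longleftrightarrow> (\<forall>x. x \<le> a \<longrightarrow> Z x = Xp x) \<and> (\<forall>x. a' \<le> x \<longrightarrow> Z x = Z a') \<and> hold lam 1 a a' Z" for Z
  have N0: "0 \<le> real N" by simp
  have Bl1: "Z x = Xp x" if "Bl Z" "x \<le> a" for Z x using that unfolding Bl_def by blast
  have Bl2: "Z x = Z a'" if "Bl Z" "a' \<le> x" for Z x using that unfolding Bl_def by blast
  have Bl3: "hold lam 1 a a' Z" if "Bl Z" for Z using that unfolding Bl_def by blast
  have BH: "hold lam (real N) (-\<tau>) T Z" if "Bl Z" for Z
  proof -
    have 1: "hold lam Nst (-\<tau>) a Z" using Bl1[OF that] by (intro hold_cong[OF hXp]) auto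
    have 2: "hold lam 1 a a' Z" using Bl3[OF that] .
    have 3: "hold lam 0 a' T Z"
    proof (rule hold_const)
      fix x assume "x \<in> {a'..T}"
      then have "a' \<le> x" by simp
      then show "Z x = Z a'" by (rule Bl2[OF that])
    qed
    have 4: "hold lam (Nst + 1) (-\<tau>) a' Z" using hold_concat[OF 1 2 Nst(1) _ basic(5)] a a' tau by auto
    have "hold lam (Nst + 1 + 0) (-\<tau>) T Z" using hold_concat[OF 4 3 _ _ basic(5)] Nst a a' tau by auto
    then show ?thesis by (rule hold_mono) (use Nst(2) in simp)
  qed
  have Bxi: "\<forall>x\<in>{-\<tau>..0}. Z x = \<xi> x" if "Bl Z" for Z using Bl1[OF that] xiXp a by auto
  have Brep: "\<Gamma> Z u = Xp a + yint (g Z) b a u" if "a \<le> u" "u \<le> a'" for Z u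
  proof (cases "u = a")
    case True then show ?thesis unfolding \<Gamma>_def by (simp add: yint_single)
  next
    case False then show ?thesis using that unfolding \<Gamma>_def by (auto simp: min_def)
  qed
  have Bdiff: "\<Gamma> Z v - \<Gamma> Z u = yint (g Z) b u v" if B: "Bl Z" and uv: "a \<le> u" "u \<le> v" "v \<le> a'" for Z u v
  proof -
    have "yint (g Z) b a v = yint (g Z) b a u + yint (g Z) b u v"
      using yint_add_X[OF BH[OF B] N0, of a u v] uv a a' by auto
    then show ?thesis using Brep[of u Z] Brep[of v Z] uv by auto
  qed
  have Gball: "Bl (\<Gamma> Z)" if B: "Bl Z" for Z
  proof -
    have i: "\<forall>x. x \<le> a \<longrightarrow> \<Gamma> Z x = Xp x" unfolding \<Gamma>_def by auto
    have ii: "\<forall>x. a' \<le> x \<longrightarrow> \<Gamma> Z x = \<Gamma> Z a'" unfolding \<Gamma>_def using a' by (auto simp: min_def)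
    have iii: "hold lam 1 a a' (\<Gamma> Z)"
    proof (rule hold_I)
      fix u v assume uv: "a \<le> u" "u \<le> v" "v \<le> a'"
      define P where "P = (v - u) powr lam"
      have P0: "0 \<le> P" unfolding P_def by simp
      have dh: "v - u \<le> h" using uv a' by auto
      have e1: "\<bar>yint (g Z) b u v - g Z u * (b v - b u)\<bar> \<le> CC * (M1 * real N) * Kb * (v - u) powr (lam + gam)"
        using yint_YL_X[OF BH[OF B] N0, of u v] uv a a' by auto
      have gu: "\<bar>g Z u\<bar> \<le> F0 + M1 * real N * T powr lam"
        using g_bound[OF _ hold_sub[OF BH[OF B], of "-\<tau>" u] N0] Bxi[OF B] uv a a' by auto
      have bu: "\<bar>b v - b u\<bar> \<le> Kb * (P * h powr (gam - lam))"
      proof -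
        have "\<bar>b v - b u\<bar> \<le> Kb * \<bar>v - u\<bar> powr gam" using holdD[OF hb, of v u] uv a a' by auto
        also have "\<dots> \<le> Kb * (P * h powr (gam - lam))" unfolding P_def
          using pw1[of "v - u" h lam gam] uv dh basic Kb by (intro mult_left_mono) auto
        finally show ?thesis .
      qed
      have p2: "(v - u) powr (lam + gam) \<le> P * h powr gam" unfolding P_def
        using pw2[of "v - u" h lam gam] uv dh basic by auto
      have t1: "\<bar>g Z u * (b v - b u)\<bar> \<le> (F0 + M1 * real N * T powr lam) * (Kb * (P * h powr (gam - lam)))"
        unfolding abs_mult using gu bu by (intro mult_mono) auto
      have t2: "CC * (M1 * real N) * Kb * (v - u) powr (lam + gam) \<le> CC * (M1 * real N) * Kb * (P * h powr gam)"
        using p2 CC_nonneg M1 Kb by (intro mult_left_mono) auto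
      have "\<bar>\<Gamma> Z v - \<Gamma> Z u\<bar> \<le> \<bar>g Z u * (b v - b u)\<bar> + CC * (M1 * real N) * Kb * (v - u) powr (lam + gam)"
        using e1 Bdiff[OF B uv] by linarith
      also have "\<dots> \<le> P * (Kb * h powr (gam - lam) * (F0 + M1 * real N * T powr lam) + CC * M1 * real N * Kb * h powr gam)"
        using t1 t2 by (simp add: algebra_simps)
      also have "\<dots> \<le> P * 1" using H1 P0 by (intro mult_left_mono) auto
      finally show "\<bar>\<Gamma> Z v - \<Gamma> Z u\<bar> \<le> 1 * (v - u) powr lam" unfolding P_def by simp
    qed
    show ?thesis unfolding Bl_def using i ii iii by blast
  qed
  have Gcontr: "hold lam (K / 2) a a' (\<lambda>x. \<Gamma> Z x - \<Gamma> W x)"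
    if BZ: "Bl Z" and BW: "Bl W" and hK: "hold lam K a a' (\<lambda>x. Z x - W x)" and K: "0 \<le> K" for Z W K
  proof -
    have D1: "hold lam 0 (-\<tau>) a (\<lambda>x. Z x - W x)" using Bl1[OF BZ] Bl1[OF BW] by (intro hold_const[where C=0]) auto
    have D3: "hold lam 0 a' T (\<lambda>x. Z x - W x)"
    proof (rule hold_const)
      fix x assume "x \<in> {a'..T}"
      then have x: "a' \<le> x" by simp
      show "Z x - W x = Z a' - W a'" using Bl2[OF BZ x] Bl2[OF BW x] by simp
    qed
    have D2: "hold lam (0 + K) (-\<tau>) a' (\<lambda>x. Z x - W x)" using hold_concat[OF D1 hK _ K basic(5)] a a' tau by auto
    have hD: "hold lam (0 + K + 0) (-\<tau>) T (\<lambda>x. Z x - W x)" using hold_concat[OF D2 D3 _ _ basic(5)] K a a' tau by auto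
    have ZW: "\<And>x. x \<in> {-\<tau>..a} \<Longrightarrow> Z x = W x" using Bl1[OF BZ] Bl1[OF BW] by auto
    show ?thesis
    proof (rule hold_I)
      fix u v assume uv: "a \<le> u" "u \<le> v" "v \<le> a'"
      have "\<bar>\<Gamma> Z v - \<Gamma> W v - (\<Gamma> Z u - \<Gamma> W u)\<bar> = \<bar>yint (g Z) b u v - yint (g W) b u v\<bar>"
        using Bdiff[OF BZ uv] Bdiff[OF BW uv] by (simp add: algebra_simps)
      also have "\<dots> \<le> c * K * Kb * (1 + CC) * (a' - a) powr gam * (v - u) powr lam"
        using contr[OF c cprop BH[OF BZ] Bxi[OF BZ] BH[OF BW] Bxi[OF BW] _ K ZW, of a u v a'] hD uv a a' by auto
      also have "\<dots> \<le> K / 2 * (v - u) powr lam"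
      proof -
        have "(a' - a) powr gam \<le> h powr gam" using a' basic by (intro powr_mono2) auto
        then have "c * Kb * (1 + CC) * (a' - a) powr gam \<le> c * Kb * (1 + CC) * h powr gam"
          using c Kb CC_nonneg by (intro mult_left_mono) auto
        then have "c * Kb * (1 + CC) * (a' - a) powr gam \<le> 1 / 2" using H2 by linarith
        then have "K * (v - u) powr lam * (c * Kb * (1 + CC) * (a' - a) powr gam) \<le> K * (v - u) powr lam * (1/2)"
          using K by (intro mult_left_mono) auto
        then show ?thesis by (simp add: algebra_simps)
      qed
      finally show "\<bar>\<Gamma> Z v - \<Gamma> W v - (\<Gamma> Z u - \<Gamma> W u)\<bar> \<le> K / 2 * (v - u) powr lam" .
    qed
  qed
  define Zs where "Zs n = (\<Gamma> ^^ n) (\<lambda>t. Xp (min t a))" for n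
  have Zs0: "Zs 0 = (\<lambda>t. Xp (min t a))" unfolding Zs_def by simp
  have ZsS: "Zs (Suc n) = \<Gamma> (Zs n)" for n unfolding Zs_def by simp
  have B0: "Bl (Zs 0)"
  proof -
    have "hold lam 0 a a' (Zs 0)" unfolding Zs0 by (rule hold_const[where C="Xp a"]) auto
    then have "hold lam 1 a a' (Zs 0)" by (rule hold_mono) simp
    moreover have "\<forall>x. x \<le> a \<longrightarrow> Zs 0 x = Xp x" unfolding Zs0 by auto
    moreover have "\<forall>x. a' \<le> x \<longrightarrow> Zs 0 x = Zs 0 a'" unfolding Zs0 using a' by (auto simp: min_def)
    ultimately show ?thesis unfolding Bl_def by blast
  qed
  have BZs: "Bl (Zs n)" for n by (induction n) (use B0 Gball ZsS in auto)
  have hD: "hold lam (2 / 2 ^ n) a a' (\<lambda>x. Zs (Suc n) x - Zs n x)" for n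
  proof (induction n)
    case 0
    show ?case using hold_diff[OF Bl3[OF BZs[of 1]] Bl3[OF BZs[of 0]]] by simp
  next
    case (Suc n)
    have "hold lam (2 / 2 ^ n / 2) a a' (\<lambda>x. \<Gamma> (Zs (Suc n)) x - \<Gamma> (Zs n) x)"
      by (rule Gcontr[OF BZs BZs Suc]) simp
    then show ?case unfolding ZsS[symmetric] by simp
  qed
  have Za: "Zs n a = Xp a" for n using Bl1[OF BZs[of n], of a] by simp
  have dbound: "\<bar>Zs (Suc n) x - Zs n x\<bar> \<le> (2 * h powr lam) * (1/2) ^ n" if x: "x \<in> {a..a'}" for n x
  proof -
    have "\<bar>(Zs (Suc n) x - Zs n x) - (Zs (Suc n) a - Zs n a)\<bar> \<le> 2 / 2 ^ n * \<bar>x - a\<bar> powr lam"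
      using holdD[OF hD[of n] x] a' by auto
    also have "\<dots> \<le> 2 / 2 ^ n * h powr lam" using x a' basic by (intro mult_left_mono powr_mono2) auto
    finally show ?thesis using Za by (simp add: power_one_over)
  qed
  have conv_x: "(\<lambda>n. Zs n x) \<longlonglongrightarrow> Zs 0 x + (\<Sum>i. Zs (Suc i) x - Zs i x)" if x: "x \<in> {a..a'}" for x
  proof -
    have sg: "summable (\<lambda>n. (2 * h powr lam) * (1/2::real) ^ n)"
      by (intro summable_mult summable_geometric) simp
    have sm: "summable (\<lambda>i. Zs (Suc i) x - Zs i x)"
    proof (rule summable_comparison_test'[OF sg])
      fix n :: nat
      show "norm (Zs (Suc n) x - Zs n x) \<le> 2 * h powr lam * (1 / 2) ^ n"
        using dbound[OF x, of n] by (simp only: real_norm_def)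
    qed
    have tel: "Zs n x = Zs 0 x + (\<Sum>i<n. Zs (Suc i) x - Zs i x)" for n
      using sum_lessThan_telescope[of "\<lambda>i. Zs i x" n] by simp
    have ee: "(\<lambda>n. Zs n x) = (\<lambda>n. Zs 0 x + (\<Sum>i<n. Zs (Suc i) x - Zs i x))"
      by (rule ext) (rule tel)
    show ?thesis unfolding ee by (intro tendsto_add tendsto_const summable_LIMSEQ[OF sm])
  qed
  define Zl where "Zl x = lim (\<lambda>n. Zs n x)" for x
  have Zlim: "(\<lambda>n. Zs n x) \<longlonglongrightarrow> Zl x" if x: "x \<in> {a..a'}" for x
  proof -
    have "Zl x = Zs 0 x + (\<Sum>i. Zs (Suc i) x - Zs i x)" unfolding Zl_def by (rule limI[OF conv_x[OF x]])
    then show ?thesis using conv_x[OF x] by simp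
  qed
  have Zl1: "Zl x = Xp x" if "x \<le> a" for x
  proof -
    have "(\<lambda>n. Zs n x) = (\<lambda>n. Xp x)" using Bl1[OF BZs that] by auto
    moreover have "lim (\<lambda>n. Xp x) = Xp x" by (rule limI[OF tendsto_const])
    ultimately show ?thesis unfolding Zl_def by simp
  qed
  have Zl2: "Zl x = Zl a'" if "a' \<le> x" for x
  proof -
    have "(\<lambda>n. Zs n x) = (\<lambda>n. Zs n a')" using Bl2[OF BZs that] by auto
    then show ?thesis unfolding Zl_def by simp
  qed
  have BZl: "Bl Zl"
  proof -
    have "hold lam 1 a a' Zl" unfolding hold_def
    proof (intro ballI)
      fix x y assume xy: "x \<in> {a..a'}" "y \<in> {a..a'}"
      have "(\<lambda>n. \<bar>Zs n x - Zs n y\<bar>) \<longlonglongrightarrow> \<bar>Zl x - Zl y\<bar>"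
        by (intro tendsto_rabs tendsto_diff Zlim xy)
      moreover have "\<forall>n. \<bar>Zs n x - Zs n y\<bar> \<le> 1 * \<bar>x - y\<bar> powr lam" using holdD[OF Bl3[OF BZs] xy] by auto
      ultimately show "\<bar>Zl x - Zl y\<bar> \<le> 1 * \<bar>x - y\<bar> powr lam" by (intro LIMSEQ_le_const2) auto
    qed
    moreover have "\<forall>x. x \<le> a \<longrightarrow> Zl x = Xp x" using Zl1 by auto
    moreover have "\<forall>x. a' \<le> x \<longrightarrow> Zl x = Zl a'"
    proof (intro allI impI)
      fix x assume "a' \<le> x"
      then show "Zl x = Zl a'" by (rule Zl2)
    qed
    ultimately show ?thesis unfolding Bl_def by blast
  qed
  have part: "hold lam (4 / 2 ^ n - 4 / 2 ^ (n + j)) a a' (\<lambda>x. Zs (n + j) x - Zs n x)" for n j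
  proof (induction j)
    case 0
    show ?case by simp (rule hold_const[where C=0], simp)
  next
    case (Suc j)
    have "hold lam (4 / 2 ^ n - 4 / 2 ^ (n + j) + 2 / 2 ^ (n + j)) a a'
        (\<lambda>x. (Zs (n + j) x - Zs n x) + (Zs (Suc (n + j)) x - Zs (n + j) x))"
      by (rule hold_add[OF Suc hD])
    moreover have "4 / 2 ^ n - 4 / 2 ^ (n + j) + 2 / 2 ^ (n + j) = 4 / 2 ^ n - 4 / (2::real) ^ (n + Suc j)"
      by (simp add: field_simps)
    ultimately show ?case by simp
  qed
  have hZl: "hold lam (4 / 2 ^ n) a a' (\<lambda>x. Zl x - Zs n x)" for n
    unfolding hold_def
  proof (intro ballI)
    fix x y assume xy: "x \<in> {a..a'}" "y \<in> {a..a'}"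
    have lx: "(\<lambda>j. Zs (n + j) x) \<longlonglongrightarrow> Zl x" using LIMSEQ_ignore_initial_segment[OF Zlim[OF xy(1)], of n]
      by (simp add: add.commute)
    have ly: "(\<lambda>j. Zs (n + j) y) \<longlonglongrightarrow> Zl y" using LIMSEQ_ignore_initial_segment[OF Zlim[OF xy(2)], of n]
      by (simp add: add.commute)
    have "(\<lambda>j. \<bar>(Zs (n + j) x - Zs n x) - (Zs (n + j) y - Zs n y)\<bar>) \<longlonglongrightarrow> \<bar>(Zl x - Zs n x) - (Zl y - Zs n y)\<bar>"
      by (intro tendsto_rabs tendsto_diff lx ly tendsto_const)
    moreover have "\<forall>j. \<bar>(Zs (n + j) x - Zs n x) - (Zs (n + j) y - Zs n y)\<bar> \<le> 4 / 2 ^ n * \<bar>x - y\<bar> powr lam"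
    proof
      fix j
      have "\<bar>(Zs (n + j) x - Zs n x) - (Zs (n + j) y - Zs n y)\<bar> \<le> (4 / 2 ^ n - 4 / 2 ^ (n + j)) * \<bar>x - y\<bar> powr lam"
        using holdD[OF part xy] by simp
      also have "\<dots> \<le> 4 / 2 ^ n * \<bar>x - y\<bar> powr lam" by (intro mult_right_mono) auto
      finally show "\<bar>(Zs (n + j) x - Zs n x) - (Zs (n + j) y - Zs n y)\<bar> \<le> 4 / 2 ^ n * \<bar>x - y\<bar> powr lam" .
    qed
    ultimately show "\<bar>Zl x - Zs n x - (Zl y - Zs n y)\<bar> \<le> 4 / 2 ^ n * \<bar>x - y\<bar> powr lam"
      by (intro LIMSEQ_le_const2) auto
  qed
  have fixp: "\<Gamma> Zl t = Zl t" if t: "t \<in> {a..a'}" for t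
  proof -
    have "\<bar>\<Gamma> Zl t - Zl t\<bar> \<le> (4 * \<bar>t - a\<bar> powr lam) / 2 ^ n" for n
    proof -
      have 1: "hold lam (4 / 2 ^ n / 2) a a' (\<lambda>x. \<Gamma> Zl x - \<Gamma> (Zs n) x)"
        by (rule Gcontr[OF BZl BZs hZl]) simp
      have 2: "hold lam (4 / 2 ^ Suc n) a a' (\<lambda>x. Zs (Suc n) x - Zl x)"
        by (rule hold_uminus[OF hZl])
      have 3: "hold lam (4 / 2 ^ n / 2 + 4 / 2 ^ Suc n) a a' (\<lambda>x. \<Gamma> Zl x - Zl x)"
        using hold_add[OF 1 2] unfolding ZsS[symmetric] by simp
      have a0: "\<Gamma> Zl a - Zl a = 0" unfolding \<Gamma>_def using Zl1[of a] by simp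
      have "\<bar>(\<Gamma> Zl t - Zl t) - (\<Gamma> Zl a - Zl a)\<bar> \<le> (4 / 2 ^ n / 2 + 4 / 2 ^ Suc n) * \<bar>t - a\<bar> powr lam"
        using holdD[OF 3 t] a' by auto
      then show ?thesis using a0 by (simp add: field_simps)
    qed
    then show ?thesis using zero_by_geom[of "\<Gamma> Zl t - Zl t" "4 * \<bar>t - a\<bar> powr lam"] by simp
  qed
  obtain Kp where Kp: "\<forall>u v. 0 \<le> u \<longrightarrow> u \<le> v \<longrightarrow> v \<le> a \<longrightarrow> \<bar>Xp v - Xp u - g Xp u * (b v - b u)\<bar> \<le> Kp * (v - u) powr (lam + gam)"
    using gs unfolding gsol_def by blast
  define Kp' where "Kp' = max Kp 0"
  have Kp0: "0 \<le> Kp'" unfolding Kp'_def by simp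
  have Kp': "\<bar>Xp v - Xp u - g Xp u * (b v - b u)\<bar> \<le> Kp' * (v - u) powr (lam + gam)" if "0 \<le> u" "u \<le> v" "v \<le> a" for u v
  proof -
    have "Kp * (v - u) powr (lam + gam) \<le> Kp' * (v - u) powr (lam + gam)" unfolding Kp'_def by (intro mult_right_mono) auto
    then show ?thesis using Kp that by fastforce
  qed
  have hY: "hold lam (real N) (-\<tau>) T Zl" by (rule BH[OF BZl])
  have repY: "Zl v - Zl u = yint (g Zl) b u v" if "a \<le> u" "u \<le> v" "v \<le> a'" for u v
    using Bdiff[OF BZl that] fixp[of u] fixp[of v] that by auto
  have gYeq: "g Zl u = g Xp u" if "u \<le> a" for u by (rule g_eq) (use Zl1 that in auto)
  define K2 where "K2 = CC * (M1 * real N) * Kb"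
  define K3 where "K3 = M1 * real N * Kb"
  have K23: "0 \<le> K2" "0 \<le> K3" unfolding K2_def K3_def using CC_nonneg M1 Kb by auto
  have hgY: "hold lam (M1 * real N) 0 T (g Zl)" using g_hold[of "real N" 0 T Zl] hY T by simp
  have germ: "\<bar>Zl v - Zl u - g Zl u * (b v - b u)\<bar> \<le> (Kp' + K2 + K3) * (v - u) powr (lam + gam)"
    if uv: "0 \<le> u" "u \<le> v" "v \<le> a'" for u v
  proof -
    define P where "P = (v - u) powr (lam + gam)"
    have P0: "0 \<le> P" unfolding P_def by simp
    have c1: "\<bar>Zl y - Zl x - g Zl x * (b y - b x)\<bar> \<le> Kp' * (y - x) powr (lam + gam)" if "0 \<le> x" "x \<le> y" "y \<le> a" for x y
      using Kp'[OF that] Zl1[of x] Zl1[of y] gYeq[of x] that by auto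
    have c2: "\<bar>Zl y - Zl x - g Zl x * (b y - b x)\<bar> \<le> K2 * (y - x) powr (lam + gam)" if "a \<le> x" "x \<le> y" "y \<le> a'" for x y
      using yint_YL_X[OF hY N0, of x y] repY[OF that] that a a' unfolding K2_def by auto
    consider "v \<le> a" | "a \<le> u" | "u < a" "a < v" by linarith
    then show ?thesis
    proof cases
      case 1
      have "Kp' * P \<le> (Kp' + K2 + K3) * P" using K23 P0 by (intro mult_right_mono) auto
      then show ?thesis using c1[OF uv(1,2) 1] unfolding P_def by linarith
    next
      case 2
      have "K2 * P \<le> (Kp' + K2 + K3) * P" using K23 Kp0 P0 by (intro mult_right_mono) auto
      then show ?thesis using c2[OF 2 uv(2,3)] unfolding P_def by linarith
    next
      case 3
      have e1: "\<bar>Zl a - Zl u - g Zl u * (b a - b u)\<bar> \<le> Kp' * P"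
      proof -
        have "(a - u) powr (lam + gam) \<le> P" unfolding P_def using 3 basic by (intro powr_mono2) auto
        then show ?thesis using c1[OF uv(1) _ order_refl] 3 Kp0 by (smt (verit) mult_left_mono)
      qed
      have e2: "\<bar>Zl v - Zl a - g Zl a * (b v - b a)\<bar> \<le> K2 * P"
      proof -
        have "(v - a) powr (lam + gam) \<le> P" unfolding P_def using 3 basic uv by (intro powr_mono2) auto
        then show ?thesis using c2[OF order_refl _ uv(3)] 3 K23 by (smt (verit) mult_left_mono)
      qed
      have e3: "\<bar>(g Zl a - g Zl u) * (b v - b a)\<bar> \<le> K3 * P"
        using prod_bound[OF hgY hb _ Kb basic(1,2), of u a v] 3 uv a' M1 unfolding K3_def P_def by auto
      have "Zl v - Zl u - g Zl u * (b v - b u) = (Zl a - Zl u - g Zl u * (b a - b u)) + (Zl v - Zl a - g Zl a * (b v - b a))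
          + (g Zl a - g Zl u) * (b v - b a)" by (simp add: algebra_simps)
      then have "\<bar>Zl v - Zl u - g Zl u * (b v - b u)\<bar> \<le> Kp' * P + K2 * P + K3 * P" using e1 e2 e3 by linarith
      then show ?thesis unfolding P_def by (simp add: algebra_simps)
    qed
  qed
  have "gsol a' Zl" unfolding gsol_def
  proof (intro conjI)
    show "\<exists>K. hold lam K (-\<tau>) a' Zl" using hold_sub[OF hY, of "-\<tau>" a'] a' by auto
    show "\<forall>x\<in>{-\<tau>..0}. Zl x = \<xi> x" by (rule Bxi[OF BZl])
    show "\<exists>K. \<forall>u v. 0 \<le> u \<longrightarrow> u \<le> v \<longrightarrow> v \<le> a' \<longrightarrow> \<bar>Zl v - Zl u - g Zl u * (b v - b u)\<bar> \<le> K * (v - u) powr (lam + gam)"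
      using germ by blast
  qed
  then show ?thesis unfolding a'_def by blast
qed

end

context setting
begin

lemma setupN:
  obtains Nst N c where "0 \<le> Nst" "Nst + 1 \<le> real N" "1 \<le> N"
    "\<forall>a X. 0 \<le> a \<longrightarrow> a \<le> T \<longrightarrow> gsol a X \<longrightarrow> hold lam Nst (-\<tau>) a X"
    "c > 0"
    "\<forall>Z W. Z \<in> holder_rho lam \<tau> \<xi> 0 T \<and> W \<in> holder_rho lam \<tau> \<xi> 0 T \<and>
                   max (holder_semi lam (0 - \<tau>) T Z) (holder_semi lam (0 - \<tau>) T W) \<le> real N \<longrightarrow>
                   holder_semi lam 0 T (\<lambda>s. f (seg \<tau> Z s) - f (seg \<tau> W s))
                     \<le> c * holder_semi lam (0 - \<tau>) T (\<lambda>x. Z x - W x)"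
proof -
  obtain Nst where Nst: "0 \<le> Nst" "\<forall>a X. 0 \<le> a \<longrightarrow> a \<le> T \<longrightarrow> gsol a X \<longrightarrow> hold lam Nst (-\<tau>) a X"
    using apriori by blast
  define N where "N = nat \<lceil>Nst\<rceil> + 1"
  have N: "Nst + 1 \<le> real N" "1 \<le> N" unfolding N_def using Nst(1) by linarith+
  obtain c where "c > 0" "\<forall>Z W. Z \<in> holder_rho lam \<tau> \<xi> 0 T \<and> W \<in> holder_rho lam \<tau> \<xi> 0 T \<and>
                   max (holder_semi lam (0 - \<tau>) T Z) (holder_semi lam (0 - \<tau>) T W) \<le> real N \<longrightarrow>
                   holder_semi lam 0 T (\<lambda>s. f (seg \<tau> Z s) - f (seg \<tau> W s))
                     \<le> c * holder_semi lam (0 - \<tau>) T (\<lambda>x. Z x - W x)"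
    using Bc[OF N(2)] by blast
  then show ?thesis using that Nst N by blast
qed

lemma exists_sol: "\<exists>X. gsol T X"
proof -
  obtain Nst N c where Nst: "0 \<le> Nst" "Nst + 1 \<le> real N" "1 \<le> N"
    and APR: "\<forall>a X. 0 \<le> a \<longrightarrow> a \<le> T \<longrightarrow> gsol a X \<longrightarrow> hold lam Nst (-\<tau>) a X"
    and c: "c > 0"
    and cprop: "\<forall>Z W. Z \<in> holder_rho lam \<tau> \<xi> 0 T \<and> W \<in> holder_rho lam \<tau> \<xi> 0 T \<and>
                   max (holder_semi lam (0 - \<tau>) T Z) (holder_semi lam (0 - \<tau>) T W) \<le> real N \<longrightarrow>
                   holder_semi lam 0 T (\<lambda>s. f (seg \<tau> Z s) - f (seg \<tau> W s))
                     \<le> c * holder_semi lam (0 - \<tau>) T (\<lambda>x. Z x - W x)"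
    by (rule setupN)
  have Fp: "0 \<le> F0 + M1 * real N * T powr lam" using F0_nonneg M1 by simp
  obtain ha where ha: "ha > 0" "\<And>h'. 0 < h' \<Longrightarrow> h' \<le> ha \<Longrightarrow> (Kb * (F0 + M1 * real N * T powr lam)) * h' powr (gam - lam) < 1/2"
    using small_pow[of "Kb * (F0 + M1 * real N * T powr lam)" "1/2" "gam - lam"] Kb Fp lam(2) by auto
  obtain hb' where hb': "hb' > 0" "\<And>h'. 0 < h' \<Longrightarrow> h' \<le> hb' \<Longrightarrow> (CC * M1 * real N * Kb) * h' powr gam < 1/2"
    using small_pow[of "CC * M1 * real N * Kb" "1/2" gam] Kb M1 CC_nonneg basic by auto
  obtain hc where hc: "hc > 0" "\<And>h'. 0 < h' \<Longrightarrow> h' \<le> hc \<Longrightarrow> (c * Kb * (1 + CC)) * h' powr gam < 1/2"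
    using small_pow[of "c * Kb * (1 + CC)" "1/2" gam] Kb c CC_nonneg basic by auto
  define h where "h = min ha (min hb' hc)"
  have h: "0 < h" "h \<le> ha" "h \<le> hb'" "h \<le> hc" unfolding h_def using ha hb' hc by auto
  have H1: "Kb * h powr (gam - lam) * (F0 + M1 * real N * T powr lam) + CC * M1 * real N * Kb * h powr gam \<le> 1"
    using ha(2)[OF h(1,2)] hb'(2)[OF h(1,3)] by (simp add: algebra_simps)
  have H2: "c * Kb * (1 + CC) * h powr gam \<le> 1/2" using hc(2)[OF h(1,4)] by simp
  have g0: "gsol 0 \<xi>" unfolding gsol_def
  proof (intro conjI)
    show "\<exists>K. hold lam K (-\<tau>) 0 \<xi>" using hxi by blast
    show "\<forall>x\<in>{-\<tau>..0}. \<xi> x = \<xi> x" by simp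
    show "\<exists>K. \<forall>u v. 0 \<le> u \<longrightarrow> u \<le> v \<longrightarrow> v \<le> 0 \<longrightarrow> \<bar>\<xi> v - \<xi> u - g \<xi> u * (b v - b u)\<bar> \<le> K * (v - u) powr (lam + gam)"
    proof (intro exI[of _ 0] allI impI)
      fix u v :: real assume "0 \<le> u" "u \<le> v" "v \<le> 0"
      then have "u = 0" "v = 0" by auto
      then show "\<bar>\<xi> v - \<xi> u - g \<xi> u * (b v - b u)\<bar> \<le> 0 * (v - u) powr (lam + gam)" by simp
    qed
  qed
  have claim: "\<exists>X. gsol (min (real k * h) T) X" for k
  proof (induction k)
    case 0
    show ?case using g0 T by (auto simp: min_def)
  next
    case (Suc k)
    then obtain X where X: "gsol (min (real k * h) T) X" by blast
    show ?case
    proof (cases "T \<le> real k * h")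
      case True
      then have "min (real (Suc k) * h) T = min (real k * h) T" using h by (auto simp: min_def distrib_right)
      then show ?thesis using X by auto
    next
      case False
      then have a: "0 \<le> real k * h" "real k * h < T" using h by auto
      have X': "gsol (real k * h) X" using X False by (simp add: min_def)
      have "\<exists>Y. gsol (min (real k * h + h) T) Y"
        by (rule local_ex[OF Nst(1,2) APR c cprop h(1) H1 H2 a X'])
      then show ?thesis by (simp add: distrib_right add.commute)
    qed
  qed
  define k where "k = nat \<lceil>T / h\<rceil>"
  have "T / h \<le> real k" unfolding k_def by linarith
  then have "T \<le> real k * h" using h by (simp add: divide_le_eq)
  then have "min (real k * h) T = T" by simp
  then show ?thesis using claim[of k] by simp
qed

lemma uniq:
  assumes gX: "gsol T X" and gY: "gsol T Y"
  shows "\<forall>x\<in>{-\<tau>..T}. X x = Y x"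
proof -
  obtain Nst N c where Nst: "0 \<le> Nst" "Nst + 1 \<le> real N" "1 \<le> N"
    and APR: "\<forall>a X. 0 \<le> a \<longrightarrow> a \<le> T \<longrightarrow> gsol a X \<longrightarrow> hold lam Nst (-\<tau>) a X"
    and c: "c > 0"
    and cprop: "\<forall>Z W. Z \<in> holder_rho lam \<tau> \<xi> 0 T \<and> W \<in> holder_rho lam \<tau> \<xi> 0 T \<and>
                   max (holder_semi lam (0 - \<tau>) T Z) (holder_semi lam (0 - \<tau>) T W) \<le> real N \<longrightarrow>
                   holder_semi lam 0 T (\<lambda>s. f (seg \<tau> Z s) - f (seg \<tau> W s))
                     \<le> c * holder_semi lam (0 - \<tau>) T (\<lambda>x. Z x - W x)"
    by (rule setupN)
  obtain h where h: "h > 0" "\<And>h'. 0 < h' \<Longrightarrow> h' \<le> h \<Longrightarrow> (c * Kb * (1 + CC)) * h' powr gam < 1/2"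
    using small_pow[of "c * Kb * (1 + CC)" "1/2" gam] Kb c CC_nonneg basic by auto
  have TT: "0 \<le> T" "T \<le> T" using T by auto
  have hX: "hold lam Nst (-\<tau>) T X" using APR TT gX by blast
  have hY: "hold lam Nst (-\<tau>) T Y" using APR TT gY by blast
  have xiX: "\<forall>x\<in>{-\<tau>..0}. X x = \<xi> x" using gX unfolding gsol_def by blast
  have xiY: "\<forall>x\<in>{-\<tau>..0}. Y x = \<xi> x" using gY unfolding gsol_def by blast
  define D where "D x = X x - Y x" for x
  have hD: "hold lam (Nst + Nst) (-\<tau>) T D" unfolding D_def by (rule hold_diff[OF hX hY])
  define S where "S = {a. 0 \<le> a \<and> a \<le> T \<and> (\<forall>x\<in>{-\<tau>..a}. X x = Y x)}"
  have S0: "0 \<in> S" unfolding S_def using xiX xiY T by auto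
  have Sne: "S \<noteq> {}" using S0 by auto
  have Sbdd: "bdd_above S" unfolding S_def by (intro bdd_aboveI[of _ T]) auto
  define s where "s = Sup S"
  have s0: "0 \<le> s" unfolding s_def using cSup_upper[OF S0 Sbdd] .
  have sT: "s \<le> T" unfolding s_def using Sne by (intro cSup_least) (auto simp: S_def)
  have below: "X x = Y x" if "-\<tau> \<le> x" "x < s" for x
  proof -
    have "x < Sup S" using that(2) unfolding s_def .
    then obtain a where "a \<in> S" "x < a" using less_cSup_iff[OF Sne Sbdd, of x] by auto
    then show ?thesis unfolding S_def using that by auto
  qed
  have Ds: "D s = 0"
  proof (rule hold_zero_limit[OF hold_sub[OF hD, of "-\<tau>" s] _ basic(1)])
    show "-\<tau> \<le> -\<tau>" "s \<le> T" using sT by auto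
    show "-\<tau> < s" using tau s0 by simp
    fix x assume "-\<tau> \<le> x" "x < s"
    then show "D x = 0" unfolding D_def using below by auto
  qed
  have sS: "s \<in> S"
  proof -
    have "X x = Y x" if "x \<in> {-\<tau>..s}" for x
    proof (cases "x < s")
      case True then show ?thesis using below that by auto
    next
      case False then have "x = s" using that by auto
      then show ?thesis using Ds unfolding D_def by simp
    qed
    then show ?thesis unfolding S_def using s0 sT by auto
  qed
  have "s = T"
  proof (rule ccontr)
    assume "s \<noteq> T"
    then have sT': "s < T" using sT by simp
    define a' where "a' = min (s + h) T"
    have a': "s < a'" "a' \<le> T" "a' - s \<le> h" "0 < a' - s" unfolding a'_def using sT' h by auto
    define Z where "Z x = X (min x a')" for x
    define W where "W x = Y (min x a')" for x
    have N0: "Nst \<le> real N" using Nst by simp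
    have hZ: "hold lam (real N) (-\<tau>) T Z" unfolding Z_def
      using hold_mono[OF hold_stop[OF hold_sub[OF hX, of "-\<tau>" a'] Nst(1) basic(5), of T] N0] a' tau s0 by auto
    have hW: "hold lam (real N) (-\<tau>) T W" unfolding W_def
      using hold_mono[OF hold_stop[OF hold_sub[OF hY, of "-\<tau>" a'] Nst(1) basic(5), of T] N0] a' tau s0 by auto
    have xiZ: "\<forall>x\<in>{-\<tau>..0}. Z x = \<xi> x" unfolding Z_def using xiX a' s0 by (auto simp: min_def)
    have xiW: "\<forall>x\<in>{-\<tau>..0}. W x = \<xi> x" unfolding W_def using xiY a' s0 by (auto simp: min_def)
    have ZW: "Z x = W x" if "x \<in> {-\<tau>..s}" for x
    proof -
      have "min x a' = x" using that a' by auto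
      then show ?thesis unfolding Z_def W_def using sS that unfolding S_def by auto
    qed
    have hoD: "holder_on lam s a' D" unfolding holder_on_hold using hold_sub[OF hD, of s a'] a' tau s0 by auto
    define L where "L = holder_semi lam s a' D"
    have hL: "hold lam L s a' D" unfolding L_def by (rule semi_hold[OF hoD])
    have L0: "0 \<le> L" unfolding L_def by (rule semi_nonneg[OF a'(1) hoD])
    have E1: "hold lam 0 (-\<tau>) s (\<lambda>x. Z x - W x)" by (rule hold_const[where C=0]) (use ZW in auto)
    have E2: "hold lam L s a' (\<lambda>x. Z x - W x)"
      by (rule hold_cong[OF hL]) (auto simp: Z_def W_def D_def min_def)
    have E3: "hold lam 0 a' T (\<lambda>x. Z x - W x)"
      by (rule hold_const[where C="X a' - Y a'"]) (auto simp: Z_def W_def min_def)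
    have E12: "hold lam (0 + L) (-\<tau>) a' (\<lambda>x. Z x - W x)" using hold_concat[OF E1 E2 _ L0 basic(5)] a' tau s0 by auto
    have hZW: "hold lam (0 + L + 0) (-\<tau>) T (\<lambda>x. Z x - W x)" using hold_concat[OF E12 E3 _ _ basic(5)] L0 a' tau s0 by auto
    have gXZ: "g X y = g Z y" if "y \<le> a'" for y by (rule g_eq) (use that in \<open>auto simp: Z_def min_def\<close>)
    have gYW: "g Y y = g W y" if "y \<le> a'" for y by (rule g_eq) (use that in \<open>auto simp: W_def min_def\<close>)
    have step: "\<bar>D v - D u\<bar> \<le> (L / 2) * (v - u) powr lam" if uv: "s \<le> u" "u \<le> v" "v \<le> a'" for u v
    proof -
      have "D v - D u = yint (g X) b u v - yint (g Y) b u v"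
        using gsol_int[OF gX, of u v] gsol_int[OF gY, of u v] uv s0 a' unfolding D_def by auto
      also have "yint (g X) b u v = yint (g Z) b u v" using gXZ uv by (intro yint_cong) auto
      also have "yint (g Y) b u v = yint (g W) b u v" using gYW uv by (intro yint_cong) auto
      finally have e: "D v - D u = yint (g Z) b u v - yint (g W) b u v" .
      have "\<bar>yint (g Z) b u v - yint (g W) b u v\<bar> \<le> c * L * Kb * (1 + CC) * (a' - s) powr gam * (v - u) powr lam"
        using contr[OF c cprop hZ xiZ hW xiW _ L0, of s u v a'] ZW hZW uv s0 a' by auto
      also have "\<dots> \<le> L / 2 * (v - u) powr lam"
      proof -
        have "c * Kb * (1 + CC) * (a' - s) powr gam \<le> 1 / 2" using h(2)[OF a'(4) a'(3)] by simp
        then have "L * (v - u) powr lam * (c * Kb * (1 + CC) * (a' - s) powr gam) \<le> L * (v - u) powr lam * (1/2)"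
          using L0 by (intro mult_left_mono) auto
        then show ?thesis by (simp add: algebra_simps)
      qed
      finally show ?thesis unfolding e .
    qed
    have "hold lam (L / 2) s a' D" by (rule hold_I) (use step in auto)
    then have "L \<le> L / 2" unfolding L_def by (rule semi_le[OF a'(1)])
    then have L00: "L = 0" using L0 by simp
    have "X x = Y x" if "x \<in> {-\<tau>..a'}" for x
    proof (cases "x \<le> s")
      case True then show ?thesis using sS that unfolding S_def by auto
    next
      case False
      then have "\<bar>D x - D s\<bar> \<le> L * \<bar>x - s\<bar> powr lam" using holdD[OF hL, of x s] that by auto
      then have "D x = 0" using L00 Ds by simp
      then show ?thesis unfolding D_def by simp
    qed
    then have "a' \<in> S" unfolding S_def using a' s0 by auto
    then have "a' \<le> s" unfolding s_def by (rule cSup_upper[OF _ Sbdd])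
    then show False using a' by simp
  qed
  then show ?thesis using sS unfolding S_def by auto
qed

end

theorem theorem1:
  fixes M :: "'a measure" and B :: "'a \<Rightarrow> real \<Rightarrow> real"
    and T \<tau> H lam :: real and \<xi> :: "real \<Rightarrow> real" and f :: "(real \<Rightarrow> real) \<Rightarrow> real"
  assumes T: "T > 0" and tau: "\<tau> > 0" and H: "1/2 < H" "H < 1"
    and prob: "prob_space M" and compl: "complete_measure M"
    and fbm: "is_fbm M H T B"
    and lam: "1/2 < lam" "lam < H"
    and xi: "holder_on lam (-\<tau>) 0 \<xi>"
    and A: "\<exists>M1>0. \<forall>\<psi>1 \<psi>2. holder_on lam (-\<tau>) 0 \<psi>1 \<longrightarrow> holder_on lam (-\<tau>) 0 \<psi>2 \<longrightarrow>
              \<bar>f \<psi>2 - f \<psi>1\<bar> \<le> M1 * sup_norm (-\<tau>) 0 (\<lambda>x. \<psi>2 x - \<psi>1 x)"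
    and Bcond: "\<forall>a1 a2. 0 \<le> a1 \<and> a1 < a2 \<and> a2 \<le> T \<longrightarrow>
              (\<forall>\<rho>. holder_on lam (a1 - \<tau>) a1 \<rho> \<longrightarrow>
                (\<forall>N::nat. N \<ge> 1 \<longrightarrow> (\<exists>c>0. \<forall>Z W.
                   Z \<in> holder_rho lam \<tau> \<rho> a1 a2 \<and> W \<in> holder_rho lam \<tau> \<rho> a1 a2 \<and>
                   max (holder_semi lam (a1 - \<tau>) a2 Z) (holder_semi lam (a1 - \<tau>) a2 W) \<le> real N \<longrightarrow>
                   holder_semi lam a1 a2 (\<lambda>s. f (seg \<tau> Z s) - f (seg \<tau> W s))
                     \<le> c * holder_semi lam (a1 - \<tau>) a2 (\<lambda>x. Z x - W x))))"
  shows "\<forall>\<omega>\<in>space M. (\<exists>\<gamma>. lam < \<gamma> \<and> \<gamma> < H \<and> holder_on \<gamma> 0 T (B \<omega>)) \<longrightarrow>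
           (\<exists>X. is_solution lam \<tau> T f \<xi> (B \<omega>) X
              \<and> (\<forall>Y. is_solution lam \<tau> T f \<xi> (B \<omega>) Y \<longrightarrow> (\<forall>t\<in>{-\<tau>..T}. Y t = X t))
              \<and> (\<exists>C>0. \<forall>s t. 0 \<le> s \<and> s \<le> t \<and> t \<le> T \<longrightarrow>
                   \<bar>X t - X s - f (seg \<tau> X s) * (B \<omega> t - B \<omega> s)\<bar> \<le> C * \<bar>t - s\<bar> powr (2 * lam)))"
proof (intro ballI impI)
  fix \<omega> assume \<omega>: "\<omega> \<in> space M" and ex: "\<exists>\<gamma>. lam < \<gamma> \<and> \<gamma> < H \<and> holder_on \<gamma> 0 T (B \<omega>)"
  then obtain \<gamma> where \<gamma>: "lam < \<gamma>" "\<gamma> < H" "holder_on \<gamma> 0 T (B \<omega>)" by blast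
  obtain Kb0 where Kb0: "hold \<gamma> Kb0 0 T (B \<omega>)" using \<gamma>(3) holder_on_hold by blast
  define Kb where "Kb = max Kb0 0"
  have hb: "hold \<gamma> Kb 0 T (B \<omega>)" unfolding Kb_def by (rule hold_nonneg_K[OF Kb0])
  have Kb: "0 \<le> Kb" unfolding Kb_def by simp
  obtain Kx0 where Kx0: "hold lam Kx0 (-\<tau>) 0 \<xi>" using xi holder_on_hold by blast
  define Kxi where "Kxi = max Kx0 0"
  have hxi: "hold lam Kxi (-\<tau>) 0 \<xi>" unfolding Kxi_def by (rule hold_nonneg_K[OF Kx0])
  have Kxi: "0 \<le> Kxi" unfolding Kxi_def by simp
  obtain M1 where M1: "M1 > 0" "\<forall>\<psi>1 \<psi>2. holder_on lam (-\<tau>) 0 \<psi>1 \<longrightarrow> holder_on lam (-\<tau>) 0 \<psi>2 \<longrightarrow>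
              \<bar>f \<psi>2 - f \<psi>1\<bar> \<le> M1 * sup_norm (-\<tau>) 0 (\<lambda>x. \<psi>2 x - \<psi>1 x)" using A by blast
  interpret S: setting \<tau> T lam \<gamma> M1 Kb Kxi \<xi> "B \<omega>" f
  proof (unfold_locales)
    show "0 < \<tau>" "0 < T" "1/2 < lam" "lam < \<gamma>" "\<gamma> < 1" using tau T lam \<gamma> H by auto
    show "hold \<gamma> Kb 0 T (B \<omega>)" "0 \<le> Kb" "hold lam Kxi (-\<tau>) 0 \<xi>" "0 \<le> Kxi" "0 < M1"
      using hb Kb hxi Kxi M1 by auto
    show "\<And>\<psi>1 \<psi>2. holder_on lam (-\<tau>) 0 \<psi>1 \<Longrightarrow> holder_on lam (-\<tau>) 0 \<psi>2 \<Longrightarrow>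
              \<bar>f \<psi>2 - f \<psi>1\<bar> \<le> M1 * sup_norm (-\<tau>) 0 (\<lambda>x. \<psi>2 x - \<psi>1 x)" using M1(2) by blast
    fix N :: nat assume N: "N \<ge> 1"
    have r: "holder_on lam (0 - \<tau>) 0 \<xi>" using xi by simp
    have "0 \<le> (0::real) \<and> (0::real) < T \<and> T \<le> T" using T by simp
    then show "\<exists>c>0. \<forall>Z W.
                   Z \<in> holder_rho lam \<tau> \<xi> 0 T \<and> W \<in> holder_rho lam \<tau> \<xi> 0 T \<and>
                   max (holder_semi lam (0 - \<tau>) T Z) (holder_semi lam (0 - \<tau>) T W) \<le> real N \<longrightarrow>
                   holder_semi lam 0 T (\<lambda>s. f (seg \<tau> Z s) - f (seg \<tau> W s))
                     \<le> c * holder_semi lam (0 - \<tau>) T (\<lambda>x. Z x - W x)"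
      using Bcond r N by blast
  qed
  have th: "1 < lam + \<gamma>" using lam \<gamma> by simp
  obtain X where gX: "S.gsol T X" using S.exists_sol by blast
  obtain KX where KX: "hold lam KX (-\<tau>) T X" using gX unfolding S.gsol_def by blast
  have xiX: "\<forall>x\<in>{-\<tau>..0}. X x = \<xi> x" using gX unfolding S.gsol_def by blast
  obtain Kg where Kg: "\<forall>u v. 0 \<le> u \<longrightarrow> u \<le> v \<longrightarrow> v \<le> T \<longrightarrow> \<bar>X v - X u - S.g X u * (B \<omega> v - B \<omega> u)\<bar> \<le> Kg * (v - u) powr (lam + \<gamma>)"
    using gX unfolding S.gsol_def by blast
  have X0: "X 0 = \<xi> 0" using xiX tau by auto
  have gdef: "S.g Z = (\<lambda>s. f (seg \<tau> Z s))" for Z unfolding S.g_def ..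
  show "\<exists>X. is_solution lam \<tau> T f \<xi> (B \<omega>) X
              \<and> (\<forall>Y. is_solution lam \<tau> T f \<xi> (B \<omega>) Y \<longrightarrow> (\<forall>t\<in>{-\<tau>..T}. Y t = X t))
              \<and> (\<exists>C>0. \<forall>s t. 0 \<le> s \<and> s \<le> t \<and> t \<le> T \<longrightarrow>
                   \<bar>X t - X s - f (seg \<tau> X s) * (B \<omega> t - B \<omega> s)\<bar> \<le> C * \<bar>t - s\<bar> powr (2 * lam))"
  proof (intro exI[of _ X] conjI)
    show "is_solution lam \<tau> T f \<xi> (B \<omega>) X" unfolding is_solution_def
    proof (intro conjI ballI)
      show "X \<in> holder_rho lam \<tau> \<xi> 0 T" unfolding holder_rho_def holder_on_hold using KX xiX by auto
      fix t assume t: "t \<in> {0..T}"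
      have "conv (S.g X) (B \<omega>) 0 t (X t - X 0)"
        by (rule sewing[OF th, of 0 t X "S.g X" "B \<omega>" Kg]) (use t Kg in auto)
      then show "has_young_integral (\<lambda>s. f (seg \<tau> X s)) (B \<omega>) 0 t (X t - \<xi> 0)"
        using conv_iff_young[of 0 t] t X0 unfolding gdef by auto
    qed
    show "\<forall>Y. is_solution lam \<tau> T f \<xi> (B \<omega>) Y \<longrightarrow> (\<forall>t\<in>{-\<tau>..T}. Y t = X t)"
    proof (intro allI impI)
      fix Y assume Ys: "is_solution lam \<tau> T f \<xi> (B \<omega>) Y"
      obtain KY0 where KY0: "hold lam KY0 (-\<tau>) T Y" using Ys unfolding is_solution_def holder_rho_def holder_on_hold by auto
      define KY where "KY = max KY0 0"
      have hY: "hold lam KY (-\<tau>) T Y" unfolding KY_def by (rule hold_nonneg_K[OF KY0])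
      have KY: "0 \<le> KY" unfolding KY_def by simp
      have xiY: "\<forall>x\<in>{-\<tau>..0}. Y x = \<xi> x" using Ys unfolding is_solution_def holder_rho_def by auto
      have cY: "conv (S.g Y) (B \<omega>) 0 t (Y t - \<xi> 0)" if "t \<in> {0..T}" for t
      proof -
        have "has_young_integral (\<lambda>s. f (seg \<tau> Y s)) (B \<omega>) 0 t (Y t - \<xi> 0)"
          using Ys that unfolding is_solution_def by blast
        moreover have "0 \<le> t" using that by simp
        ultimately show ?thesis using conv_iff_young[of 0 t] unfolding gdef by blast
      qed
      have germ: "\<bar>Y v - Y u - S.g Y u * (B \<omega> v - B \<omega> u)\<bar> \<le> S.CC * (M1 * KY) * Kb * (v - u) powr (lam + \<gamma>)"
        if uv: "0 \<le> u" "u \<le> v" "v \<le> T" for u v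
      proof -
        have cuv: "conv (S.g Y) (B \<omega>) u v (yint (S.g Y) (B \<omega>) u v)" using S.conv_gX(1)[OF hY KY, of u v] uv by auto
        have "Y v - \<xi> 0 = (Y u - \<xi> 0) + yint (S.g Y) (B \<omega>) u v"
          using conv_add[OF cY[of u] cuv cY[of v]] uv by auto
        then have "yint (S.g Y) (B \<omega>) u v = Y v - Y u" by simp
        then show ?thesis using S.yint_YL_X[OF hY KY, of u v] uv by auto
      qed
      have gY: "S.gsol T Y" unfolding S.gsol_def using hY xiY germ by blast
      show "\<forall>t\<in>{-\<tau>..T}. Y t = X t" using S.uniq[OF gX gY] by auto
    qed
    define Kg' where "Kg' = max Kg 0"
    define C where "C = Kg' * T powr (\<gamma> - lam) + 1"
    have Kg': "0 \<le> Kg'" unfolding Kg'_def by simp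
    have C: "0 < C" unfolding C_def using Kg' by (simp add: add_nonneg_pos)
    show "\<exists>C>0. \<forall>s t. 0 \<le> s \<and> s \<le> t \<and> t \<le> T \<longrightarrow>
                   \<bar>X t - X s - f (seg \<tau> X s) * (B \<omega> t - B \<omega> s)\<bar> \<le> C * \<bar>t - s\<bar> powr (2 * lam)"
    proof (intro exI[of _ C] conjI allI impI)
      show "0 < C" by (rule C)
      fix s t assume st: "0 \<le> s \<and> s \<le> t \<and> t \<le> T"
      have "\<bar>X t - X s - f (seg \<tau> X s) * (B \<omega> t - B \<omega> s)\<bar> \<le> Kg * (t - s) powr (lam + \<gamma>)"
        using Kg st unfolding gdef by auto
      also have "\<dots> \<le> Kg' * (t - s) powr (lam + \<gamma>)" unfolding Kg'_def by (intro mult_right_mono) auto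
      also have "\<dots> \<le> Kg' * ((t - s) powr (2 * lam) * T powr (\<gamma> - lam))"
      proof -
        have "(t - s) powr (lam + \<gamma>) = (t - s) powr (2 * lam) * (t - s) powr (\<gamma> - lam)"
          using powr_add[of "t - s" "2 * lam" "\<gamma> - lam"] by simp
        also have "\<dots> \<le> (t - s) powr (2 * lam) * T powr (\<gamma> - lam)"
          using st \<gamma> by (intro mult_left_mono powr_mono2) auto
        finally show ?thesis using Kg' by (intro mult_left_mono) auto
      qed
      also have "\<dots> = (Kg' * T powr (\<gamma> - lam)) * (t - s) powr (2 * lam)" by (simp add: algebra_simps)
      also have "\<dots> \<le> C * (t - s) powr (2 * lam)" unfolding C_def by (intro mult_right_mono) auto
      finally show "\<bar>X t - X s - f (seg \<tau> X s) * (B \<omega> t - B \<omega> s)\<bar> \<le> C * \<bar>t - s\<bar> powr (2 * lam)"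
        using st by simp
    qed
  qed
qed

end
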